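(* Let $d,n\ge1$, $t=d+n$, $u=\binom{n+2}{2}$, $p=u(d+1)-1$, let ${\mathbb X}\subseteq{\mathbb P}^2$ be a set of $\binom{d+1}{2}$ points in generic position, and let ${\bf L}=(L_{lj})$, $F_1,\dots,F_{d+1}$, $\lambda_{ljk}$ and the matrix ${\bf E}$ be as in the context. Let $\overline{\Lambda_t}\subseteq{\mathbb P}^p$ be the closure of the image of the rational map $\varphi:{\mathbb P}^2 - - \rightarrow{\mathbb P}^p$, $\varphi([w_1:w_2:w_3])=[x_{ij}]$ with $x_{ij}=z_iF_j$. Let ${\bf V}\subseteq{\mathbb P}^p$ be the zero set of the following equations in the coordinates $x_{ij}$: (1) the $\binom{n+1}{2}d$ linear equations $\sum_{(\alpha,j)}{\bf E}_{(\beta,l),(\alpha,j)}x_{i(\alpha)j}=0$, one for each row $(\beta,l)$ of ${\bf E}$, where $i(\alpha)$ is the index with $z_{i(\alpha)}=w^\alpha$; (2) all $2\times2$ minors of the $u\times(d+1)$ matrix $(x_{ij})$; (3) for each $j=1,\dots,d+1$, all $2\times2$ minors of the $3\times\binom{n+1}{2}$ catalecticant matrix whose entry in row $k\in\{1,2,3\}$ and column $w^\beta$ ($|\beta|=n-1$) is $x_{i(\gamma)j}$ where $w^\gamma=w_kw^\beta$. Then ${\bf V}=\overline{\Lambda_t}$ as sets.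
   Context: $\mathfrak{k}$ is algebraically closed of characteristic $0$; $w^\alpha=w_1^{\alpha_1}w_2^{\alpha_2}w_3^{\alpha_3}$, $|\alpha|=\sum\alpha_i$. $z_1=w_1^n,z_2=w_1^{n-1}w_2,\dots,z_u=w_3^n$ are the degree-$n$ monomials in lexicographic order ($w_1>w_2>w_3$). "Generic position" means $\dim_{\mathfrak{k}}(\mathfrak{k}[w_1,w_2,w_3]/I_{\mathbb X})_s=\min\{\binom{s+2}{2},|{\mathbb X}|\}$ for all $s$; then the homogeneous ideal $I_{\mathbb X}$ is generated by $F_j=(-1)^{j+1}\det({\bf L}\setminus j\text{-th column})$, $j=1,\dots,d+1$, for a $d\times(d+1)$ matrix ${\bf L}=(L_{lj})$ of linear forms; write $L_{lj}=\sum_{k=1}^3\lambda_{ljk}w_k$. ${\bf E}$ is the matrix with rows indexed by $(\beta,l)$, $|\beta|=n-1$, $1\le l\le d$, columns indexed by $(\alpha,j)$, $|\alpha|=n$, $1\le j\le d+1$, and entry $\lambda_{ljk}$ if $w^\alpha=w^\beta w_k$ for some $k$, $0$ otherwise (so the linear equations (1) encode the relations $\sum_j L_{lj}w^\beta F_j=0$). $\overline{\Lambda_t}$ is the embedding of the blowup of ${\mathbb P}^2$ at ${\mathbb X}$ by the linear system of degree-$t$ forms in $I_{\mathbb X}$. *)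

theory Defs
  imports "Jordan_Normal_Form.Determinant" "HOL-Library.Function_Algebras"
    "HOL-Library.Product_Lexorder" "HOL-Computational_Algebra.Polynomial"
begin

type_synonym mexp = "nat \<times> nat \<times> nat"   \<comment> \<open>exponent vector (a1,a2,a3) of w1^a1 w2^a2 w3^a3\<close>
type_synonym 'k pt3 = "'k \<times> 'k \<times> 'k"

definition alg_closed :: "'k::field itself \<Rightarrow> bool" where
  "alg_closed _ \<longleftrightarrow> (\<forall>q::'k poly. degree q \<ge> 1 \<longrightarrow> (\<exists>x. poly q x = 0))"

definition mdeg :: "mexp \<Rightarrow> nat" where
  "mdeg a = fst a + fst (snd a) + snd (snd a)"

definition mons_set :: "nat \<Rightarrow> mexp set" where
  "mons_set s = {a. mdeg a = s}"

text \<open>Degree-s monomials in lexicographic order w1 > w2 > w3 (first = w1^s).\<close>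
definition mons :: "nat \<Rightarrow> mexp list" where
  "mons s = rev (sorted_list_of_set (mons_set s))"

text \<open>index i(alpha) with z_(i(alpha)) = w^alpha (0-based)\<close>
definition midx :: "nat \<Rightarrow> mexp \<Rightarrow> nat" where
  "midx s a = (THE i. i < length (mons s) \<and> mons s ! i = a)"

text \<open>unit exponent vector of w_(k+1), k = 0,1,2\<close>
definition ek :: "nat \<Rightarrow> mexp" where
  "ek k = (if k = 0 then (1,0,0) else if k = 1 then (0,1,0) else (0,0,1))"

definition madd :: "mexp \<Rightarrow> mexp \<Rightarrow> mexp" where
  "madd a b = (fst a + fst b, fst (snd a) + fst (snd b), snd (snd a) + snd (snd b))"

definition coord :: "'k pt3 \<Rightarrow> nat \<Rightarrow> 'k" where
  "coord w k = (if k = 0 then fst w else if k = 1 then fst (snd w) else snd (snd w))"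

definition mon3 :: "mexp \<Rightarrow> 'k::comm_semiring_1 pt3 \<Rightarrow> 'k" where
  "mon3 a w = fst w ^ fst a * fst (snd w) ^ fst (snd a) * snd (snd w) ^ snd (snd a)"

definition hom_form3 :: "nat \<Rightarrow> ('k::comm_semiring_1 pt3 \<Rightarrow> 'k) \<Rightarrow> bool" where
  "hom_form3 s G \<longleftrightarrow> (\<exists>c. \<forall>w. G w = (\<Sum>a\<in>mons_set s. c a * mon3 a w))"

definition poly_fun3 :: "('k::comm_semiring_1 pt3 \<Rightarrow> 'k) \<Rightarrow> bool" where
  "poly_fun3 G \<longleftrightarrow> (\<exists>N c. \<forall>w. G w = (\<Sum>a\<in>{a. mdeg a \<le> N}. c a * mon3 a w))"

text \<open>X is a finite set of points of P^2, given by nonzero pairwise non-proportional representatives.\<close>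
definition proj_point_set :: "'k::field pt3 set \<Rightarrow> bool" where
  "proj_point_set X \<longleftrightarrow> finite X \<and> (0,0,0) \<notin> X \<and>
     (\<forall>x\<in>X. \<forall>y\<in>X. x \<noteq> y \<longrightarrow> \<not> (\<exists>c. y = (c * fst x, c * fst (snd x), c * snd (snd x))))"

text \<open>dim_k (k[w]/I_X)_s = dimension of the space of values of degree-s forms on X
  (image of the evaluation map, whose kernel is (I_X)_s)\<close>
definition hilb :: "'k::field pt3 set \<Rightarrow> nat \<Rightarrow> nat" where
  "hilb X s = vector_space.dim (\<lambda>(c::'k) f x. c * f x)
      ((\<lambda>a. \<lambda>x. if x \<in> X then mon3 a x else 0) ` mons_set s)"

definition generic_position :: "'k::field pt3 set \<Rightarrow> bool" where
  "generic_position X \<longleftrightarrow> (\<forall>s. hilb X s = min ((s + 2) choose 2) (card X))"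

text \<open>L_(lj) = sum_k lambda l j k * w_k  (0-based l < d, j \<le> d, k < 3)\<close>
definition Lform :: "(nat \<Rightarrow> nat \<Rightarrow> nat \<Rightarrow> 'k) \<Rightarrow> nat \<Rightarrow> nat \<Rightarrow> 'k::comm_ring_1 pt3 \<Rightarrow> 'k" where
  "Lform lam l j w = (\<Sum>k<3. lam l j k * coord w k)"

text \<open>F_j = (-1)^(j+1) det(L without j-th column), written 0-based (j = 0..d)\<close>
definition Fform :: "nat \<Rightarrow> (nat \<Rightarrow> nat \<Rightarrow> nat \<Rightarrow> 'k) \<Rightarrow> nat \<Rightarrow> 'k::comm_ring_1 pt3 \<Rightarrow> 'k" where
  "Fform d lam j w = (-1) ^ j *
     det (mat d d (\<lambda>(l, c). Lform lam l (if c < j then c else Suc c) w))"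

text \<open>homogeneous ideal I_X generated by F_1..F_(d+1): homogeneous parts agree\<close>
definition ideal_generated_by :: "'k::field pt3 set \<Rightarrow> nat \<Rightarrow> (nat \<Rightarrow> 'k pt3 \<Rightarrow> 'k) \<Rightarrow> bool" where
  "ideal_generated_by X m F \<longleftrightarrow> (\<forall>s G. hom_form3 s G \<longrightarrow>
     ((\<forall>x\<in>X. G x = 0) \<longleftrightarrow>
      (\<exists>A. (\<forall>j<m. poly_fun3 (A j)) \<and> (\<forall>w. G w = (\<Sum>j<m. A j w * F j w)))))"

definition Ementry :: "(nat \<Rightarrow> nat \<Rightarrow> nat \<Rightarrow> 'k::zero) \<Rightarrow> mexp \<times> nat \<Rightarrow> mexp \<times> nat \<Rightarrow> 'k" where
  "Ementry lam r c = (case r of (b, l) \<Rightarrow> case c of (a, j) \<Rightarrow>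
     (if \<exists>k<3. a = madd b (ek k) then lam l j (THE k. k < 3 \<and> a = madd b (ek k)) else 0))"

text \<open>Coordinates of P^p: x (i,j), i < u, j \<le> d (0-based).  Points of P^p are represented by
  nonzero vectors supported on the index set.\<close>
definition cidx :: "nat \<Rightarrow> nat \<Rightarrow> (nat \<times> nat) set" where
  "cidx u d = {..<u} \<times> {..d}"

definition proj_reps :: "(nat \<times> nat) set \<Rightarrow> ((nat \<times> nat) \<Rightarrow> 'k::zero) set" where
  "proj_reps C = {x. (\<forall>c. c \<notin> C \<longrightarrow> x c = 0) \<and> (\<exists>c\<in>C. x c \<noteq> 0)}"

definition expo :: "'i set \<Rightarrow> nat \<Rightarrow> ('i \<Rightarrow> nat) set" where
  "expo C s = {m. (\<forall>c. c \<notin> C \<longrightarrow> m c = 0) \<and> (\<Sum>c\<in>C. m c) = s}"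

definition hom_poly :: "'i set \<Rightarrow> nat \<Rightarrow> (('i \<Rightarrow> 'k::comm_semiring_1) \<Rightarrow> 'k) \<Rightarrow> bool" where
  "hom_poly C s G \<longleftrightarrow> (\<exists>c. \<forall>x. G x = (\<Sum>m\<in>expo C s. c m * (\<Prod>i\<in>C. x i ^ m i)))"

text \<open>Zariski closure in projective space of a set S of representatives\<close>
definition proj_closure :: "'i set \<Rightarrow> ('i \<Rightarrow> 'k::comm_semiring_1) set \<Rightarrow> ('i \<Rightarrow> 'k) set \<Rightarrow> ('i \<Rightarrow> 'k) set" where
  "proj_closure C P S = {x \<in> P. \<forall>s G. hom_poly C s G \<longrightarrow> (\<forall>y\<in>S. G y = 0) \<longrightarrow> G x = 0}"

definition phi :: "nat \<Rightarrow> nat \<Rightarrow> (nat \<Rightarrow> 'k pt3 \<Rightarrow> 'k) \<Rightarrow> 'k::comm_semiring_1 pt3 \<Rightarrow> (nat \<times> nat \<Rightarrow> 'k)" where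
  "phi n d F w = (\<lambda>(i, j). if i < length (mons n) \<and> j \<le> d then mon3 (mons n ! i) w * F j w else 0)"

text \<open>Image of the rational map on its domain of definition\<close>
definition phi_image :: "nat \<Rightarrow> nat \<Rightarrow> (nat \<Rightarrow> 'k pt3 \<Rightarrow> 'k) \<Rightarrow> (nat \<times> nat \<Rightarrow> 'k::comm_semiring_1) set" where
  "phi_image n d F = {phi n d F w | w. w \<noteq> (0,0,0) \<and> phi n d F w \<noteq> (\<lambda>_. 0)}"

definition Vset :: "nat \<Rightarrow> nat \<Rightarrow> (nat \<Rightarrow> nat \<Rightarrow> nat \<Rightarrow> 'k) \<Rightarrow> (nat \<times> nat \<Rightarrow> 'k::comm_ring_1) set" where
  "Vset n d lam = {x \<in> proj_reps (cidx (length (mons n)) d).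
     \<comment> \<open>(1) linear equations from the rows of E\<close>
     (\<forall>b\<in>mons_set (n - 1). \<forall>l<d.
        (\<Sum>i<length (mons n). \<Sum>j\<le>d. Ementry lam (b, l) (mons n ! i, j) * x (i, j)) = 0) \<and>
     \<comment> \<open>(2) 2x2 minors of (x_ij)\<close>
     (\<forall>i1<length (mons n). \<forall>i2<length (mons n). \<forall>j1\<le>d. \<forall>j2\<le>d.
        x (i1, j1) * x (i2, j2) - x (i1, j2) * x (i2, j1) = 0) \<and>
     \<comment> \<open>(3) 2x2 minors of the catalecticant matrices\<close>
     (\<forall>j\<le>d. \<forall>k1<3. \<forall>k2<3. \<forall>b1\<in>mons_set (n - 1). \<forall>b2\<in>mons_set (n - 1).
        x (midx n (madd b1 (ek k1)), j) * x (midx n (madd b2 (ek k2)), j)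
        - x (midx n (madd b2 (ek k1)), j) * x (midx n (madd b1 (ek k2)), j) = 0)}"

end

theory Submission imports Defs begin

lemma mons_set_sub: "mons_set s \<subseteq> {..s} \<times> {..s} \<times> {..s}"
  by (auto simp: mons_set_def mdeg_def)

lemma finite_mons_set[simp]: "finite (mons_set s)"
  using finite_subset[OF mons_set_sub] by blast

lemma set_mons[simp]: "set (mons s) = mons_set s"
  by (simp add: mons_def)

lemma distinct_mons[simp]: "distinct (mons s)"
  by (simp add: mons_def)

lemma mons_nth_in: "i < length (mons s) \<Longrightarrow> mons s ! i \<in> mons_set s"
  using nth_mem set_mons by metis

lemma midx_nth: assumes "i < length (mons s)" shows "midx s (mons s ! i) = i"
  unfolding midx_def
  by (rule the_equality, use assms in simp, metis assms distinct_mons nth_eq_iff_index_eq)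

lemma midx_props: assumes "a \<in> mons_set s"
  shows "midx s a < length (mons s)" "mons s ! midx s a = a"
proof -
  obtain i where i: "i < length (mons s)" "mons s ! i = a"
    using assms by (metis in_set_conv_nth set_mons)
  then have "midx s a = i" using midx_nth by blast
  thus "midx s a < length (mons s)" "mons s ! midx s a = a" using i by auto
qed

lemma sum_mons: "(\<Sum>i<length (mons s). f (mons s ! i)) = (\<Sum>a\<in>mons_set s. f a)"
proof -
  have "(\<Sum>i<length (mons s). f (mons s ! i)) = sum_list (map f (mons s))"
    by (simp add: sum_list_sum_nth atLeast0LessThan)
  also have "\<dots> = sum f (set (mons s))" by (simp add: sum_list_distinct_conv_sum_set)
  finally show ?thesis by simp
qed

lemma card_pairs: "card {(a::nat, b::nat). a + b \<le> n} = (n + 2) choose 2"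
proof (induction n)
  case 0
  have "{(a::nat, b::nat). a + b \<le> 0} = {(0,0)}" by auto
  then show ?case by (simp add: choose_two)
next
  case (Suc n)
  have fin: "finite {(a::nat, b::nat). a + b \<le> m}" for m
    by (rule finite_subset[of _ "{..m} \<times> {..m}"]) auto
  have eq: "{(a::nat, b::nat). a + b \<le> Suc n} = {(a, b). a + b \<le> n} \<union> (\<lambda>a. (a, Suc n - a)) ` {..Suc n}"
    by auto
  have disj: "{(a::nat, b::nat). a + b \<le> n} \<inter> (\<lambda>a. (a, Suc n - a)) ` {..Suc n} = {}" by auto
  have inj: "inj_on (\<lambda>a. (a, Suc n - a)) {..Suc n}" by (auto simp: inj_on_def)
  have "card {(a::nat, b::nat). a + b \<le> Suc n} = ((n + 2) choose 2) + (n + 2)"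
    unfolding eq using card_Un_disjoint[OF fin finite_imageI disj] card_image[OF inj] Suc by simp
  also have "\<dots> = (Suc n + 2) choose 2"
    by (simp add: numeral_2_eq_2 choose_two)
  finally show ?case .
qed

lemma length_mons: "length (mons n) = (n + 2) choose 2"
proof -
  have "length (mons n) = card (mons_set n)"
    using distinct_card[OF distinct_mons] by simp
  also have "mons_set n = (\<lambda>(a, b). (a, b, n - a - b)) ` {(a, b). a + b \<le> n}"
    by (auto simp: mons_set_def mdeg_def image_iff)
  also have "card \<dots> = card {(a::nat, b::nat). a + b \<le> n}"
    by (rule card_image) (auto simp: inj_on_def)
  finally show ?thesis using card_pairs by simp
qed

lemma mon3_madd: "mon3 (madd a b) w = mon3 a w * mon3 b w"
  by (simp add: mon3_def madd_def power_add algebra_simps)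

lemma mdeg_madd: "mdeg (madd a b) = mdeg a + mdeg b"
  by (simp add: mdeg_def madd_def)

lemma mdeg_ek: "mdeg (ek k) = 1"
  by (simp add: mdeg_def ek_def)

lemma madd_ek_in: "b \<in> mons_set (n - 1) \<Longrightarrow> n \<ge> 1 \<Longrightarrow> madd b (ek k) \<in> mons_set n"
  by (simp add: mons_set_def mdeg_madd mdeg_ek)

lemma lt3: "(k::nat) < 3 \<longleftrightarrow> k = 0 \<or> k = 1 \<or> k = 2" by auto

lemma madd_ek_inj: "k1 < 3 \<Longrightarrow> k2 < 3 \<Longrightarrow> madd b (ek k1) = madd b (ek k2) \<longleftrightarrow> k1 = k2"
proof -
  assume "k1 < 3" "k2 < 3"
  then have "k1 = 0 \<or> k1 = 1 \<or> k1 = 2" "k2 = 0 \<or> k2 = 1 \<or> k2 = 2" by auto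
  then show ?thesis by (elim disjE) (simp_all add: madd_def ek_def)
qed

lemma madd_ek_inj2: "madd b1 (ek k) = madd b2 (ek k) \<longleftrightarrow> b1 = b2"
  by (cases b1; cases b2) (simp add: madd_def ek_def)

lemma mon3_ek: "mon3 (ek k) w = coord w k"
  by (simp add: mon3_def ek_def coord_def)

definition mcomp :: "mexp \<Rightarrow> nat \<Rightarrow> nat" where
  "mcomp a k = (if k = 0 then fst a else if k = 1 then fst (snd a) else snd (snd a))"

lemma mon3_prod: "mon3 a w = (\<Prod>k<3. coord w k ^ mcomp a k)"
  by (simp add: mon3_def coord_def mcomp_def numeral_3_eq_3 lessThan_Suc mult_ac)

definition msub :: "mexp \<Rightarrow> nat \<Rightarrow> mexp" where
  "msub a k = (if k = 0 then (fst a - 1, snd a) else if k = 1 then (fst a, fst (snd a) - 1, snd (snd a))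
     else (fst a, fst (snd a), snd (snd a) - 1))"

lemma msub_madd: "mcomp a k > 0 \<Longrightarrow> k < 3 \<Longrightarrow> madd (msub a k) (ek k) = a"
  by (cases a; auto simp: mcomp_def msub_def madd_def ek_def)

lemma mdeg_msub: "mcomp a k > 0 \<Longrightarrow> k < 3 \<Longrightarrow> mdeg (msub a k) = mdeg a - 1"
  by (cases a; auto simp: mcomp_def msub_def mdeg_def)

lemma exists_pos_comp: "mdeg a \<ge> 1 \<Longrightarrow> \<exists>k<3. mcomp a k > 0"
proof (cases a)
  case (fields x y z)
  assume "mdeg a \<ge> 1"
  then have "x > 0 \<or> y > 0 \<or> z > 0" using fields by (simp add: mdeg_def) presburger
  moreover have "0 < x \<Longrightarrow> ?thesis" using fields by (intro exI[of _ "0::nat"]) (simp add: mcomp_def)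
  moreover have "0 < y \<Longrightarrow> ?thesis" using fields by (intro exI[of _ "1::nat"]) (simp add: mcomp_def)
  moreover have "0 < z \<Longrightarrow> ?thesis" using fields by (intro exI[of _ "2::nat"]) (simp add: mcomp_def)
  ultimately show ?thesis by blast
qed

lemma decomp_mons: assumes "a \<in> mons_set n" "n \<ge> 1"
  shows "\<exists>k<3. \<exists>b\<in>mons_set (n - 1). a = madd b (ek k)"
proof -
  have "mdeg a \<ge> 1" using assms by (simp add: mons_set_def)
  then obtain k where k: "k < 3" "mcomp a k > 0" using exists_pos_comp by blast
  have "msub a k \<in> mons_set (n - 1)" using mdeg_msub[OF k(2,1)] assms(1) by (simp add: mons_set_def)
  then show ?thesis using k msub_madd[OF k(2,1)] by metis
qed

lemma comp_madd: "mcomp (madd a b) k = mcomp a k + mcomp b k"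
  by (simp add: mcomp_def madd_def)

lemma comp_ek: "mcomp (ek k) m = (if m = k \<or> (m \<ge> 2 \<and> k \<ge> 2) then 1 else 0)"
  by (auto simp: mcomp_def ek_def)

definition lin :: "'k::comm_ring_1 pt3 \<Rightarrow> 'k \<Rightarrow> 'k pt3 \<Rightarrow> 'k pt3" where
  "lin v e u = (fst v + e * fst u, fst (snd v) + e * fst (snd u), snd (snd v) + e * snd (snd u))"

definition lc :: "'k::comm_ring_1 \<Rightarrow> 'k pt3 \<Rightarrow> 'k \<Rightarrow> 'k pt3 \<Rightarrow> 'k pt3" where
  "lc a u b w = (a * fst u + b * fst w, a * fst (snd u) + b * fst (snd w), a * snd (snd u) + b * snd (snd w))"

lemma coord_lin: "coord (lin v e u) k = coord v k + e * coord u k"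
  by (simp add: lin_def coord_def)

lemma coord_lc: "coord (lc a u b w) k = a * coord u k + b * coord w k"
  by (simp add: lc_def coord_def)

lemma Lform_lin: "Lform lam l j (lin v e u) = Lform lam l j v + e * Lform lam l j u"
  by (simp add: Lform_def coord_lin algebra_simps sum.distrib sum_distrib_left)

lemma Lform_lc: "Lform lam l j (lc a u b w) = a * Lform lam l j u + b * Lform lam l j w"
  by (simp add: Lform_def coord_lc algebra_simps sum.distrib sum_distrib_left)

definition colj :: "nat \<Rightarrow> nat \<Rightarrow> nat" where
  "colj j c = (if c < j then c else Suc c)"

abbreviation perms :: "nat \<Rightarrow> (nat \<Rightarrow> nat) set" where
  "perms d \<equiv> {p. p permutes {0..<d}}"

lemma det_leibniz: "det (mat d d f) = (\<Sum>p\<in>perms d. signof p * (\<Prod>i=0..<d. f (i, p i)))"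
proof -
  have "(\<Prod>i=0..<d. mat d d f $$ (i, p i)) = (\<Prod>i=0..<d. f (i, p i))" if "p permutes {0..<d}" for p
  proof -
    have "\<And>x. x < d \<Longrightarrow> p x < d" using permutes_in_image[OF that] by auto
    then show ?thesis by (intro prod.cong) auto
  qed
  then show ?thesis unfolding det_def by (auto intro: sum.cong)
qed

lemma Fform_leibniz: "Fform d lam j w = (-1) ^ j *
   (\<Sum>p\<in>perms d. signof p * (\<Prod>i=0..<d. Lform lam i (colj j (p i)) w))"
  unfolding Fform_def det_leibniz colj_def by simp

definition FP :: "nat \<Rightarrow> (nat \<Rightarrow> nat \<Rightarrow> nat \<Rightarrow> 'k) \<Rightarrow> nat \<Rightarrow> 'k::comm_ring_1 pt3 \<Rightarrow> 'k pt3 \<Rightarrow> 'k poly" where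
  "FP d lam j v u = smult ((-1) ^ j) (\<Sum>p\<in>perms d. smult (signof p)
      (\<Prod>i=0..<d. [:Lform lam i (colj j (p i)) v, Lform lam i (colj j (p i)) u:]))"

definition Dd :: "nat \<Rightarrow> (nat \<Rightarrow> nat \<Rightarrow> nat \<Rightarrow> 'k) \<Rightarrow> nat \<Rightarrow> 'k::comm_ring_1 pt3 \<Rightarrow> 'k pt3 \<Rightarrow> 'k" where
  "Dd d lam j v u = (-1) ^ j * (\<Sum>p\<in>perms d. signof p *
      (\<Sum>i\<in>{0..<d}. Lform lam i (colj j (p i)) u * (\<Prod>i'\<in>{0..<d} - {i}. Lform lam i' (colj j (p i')) v)))"

lemma poly_FP: "poly (FP d lam j v u) e = Fform d lam j (lin v e u)"
  unfolding FP_def Fform_leibniz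
  by (simp add: poly_sum poly_prod Lform_lin algebra_simps)

lemma coeff_prod_lin:
  fixes a b :: "nat \<Rightarrow> 'k::comm_ring_1"
  assumes "finite I"
  shows "coeff (\<Prod>i\<in>I. [:a i, b i:]) 0 = (\<Prod>i\<in>I. a i)"
    "coeff (\<Prod>i\<in>I. [:a i, b i:]) 1 = (\<Sum>i\<in>I. b i * (\<Prod>i'\<in>I - {i}. a i'))"
proof -
  have "coeff (\<Prod>i\<in>I. [:a i, b i:]) 0 = (\<Prod>i\<in>I. a i) \<and>
    coeff (\<Prod>i\<in>I. [:a i, b i:]) 1 = (\<Sum>i\<in>I. b i * (\<Prod>i'\<in>I - {i}. a i'))"
    using assms
  proof (induction I rule: finite_induct)
    case empty
    then show ?case by simp
  next
    case (insert x F)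
    let ?P = "\<Prod>i\<in>F. [:a i, b i:]"
    have c1: "coeff ([:a x, b x:] * ?P) 1 = a x * coeff ?P 1 + b x * coeff ?P 0"
      by (simp add: coeff_pCons)
    have c0: "coeff ([:a x, b x:] * ?P) 0 = a x * coeff ?P 0"
      by simp
    have s: "(\<Sum>i\<in>F. b i * (\<Prod>i'\<in>insert x F - {i}. a i')) = a x * (\<Sum>i\<in>F. b i * (\<Prod>i'\<in>F - {i}. a i'))"
    proof -
      have "(\<Prod>i'\<in>insert x F - {i}. a i') = a x * (\<Prod>i'\<in>F - {i}. a i')" if "i \<in> F" for i
      proof -
        have "insert x F - {i} = insert x (F - {i})" using insert.hyps that by auto
        then show ?thesis using insert.hyps by simp
      qed
      then show ?thesis by (simp add: sum_distrib_left algebra_simps)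
    qed
    have "insert x F - {x} = F" using insert.hyps by auto
    then show ?case using insert c1 c0 s by (simp add: algebra_simps)
  qed
  then show "coeff (\<Prod>i\<in>I. [:a i, b i:]) 0 = (\<Prod>i\<in>I. a i)"
    "coeff (\<Prod>i\<in>I. [:a i, b i:]) 1 = (\<Sum>i\<in>I. b i * (\<Prod>i'\<in>I - {i}. a i'))" by auto
qed

lemma coeff_sum_poly: "coeff (\<Sum>x\<in>A. f x) n = (\<Sum>x\<in>A. coeff (f x) n)"
  by (induction A rule: infinite_finite_induct) auto

lemma coeff_FP0: "coeff (FP d lam j v u) 0 = Fform d lam j v"
  unfolding FP_def Fform_leibniz by (simp add: coeff_sum_poly coeff_prod_lin)

lemma coeff_FP1: "coeff (FP d lam j v u) 1 = Dd d lam j v u"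
  unfolding FP_def Dd_def by (simp add: coeff_sum_poly coeff_prod_lin(2)[unfolded One_nat_def])

lemma Dd_lc: "Dd d lam j v (lc a u1 b u2) = a * Dd d lam j v u1 + b * Dd d lam j v u2"
  unfolding Dd_def Lform_lc
  by (simp add: algebra_simps sum.distrib sum_distrib_left)

lemma LF_zero:
  fixes w :: "'k::comm_ring_1 pt3"
  assumes l: "l < d"
  shows "(\<Sum>j\<le>d. Lform lam l j w * Fform d lam j w) = 0"
proof -
  define N where "N = mat (Suc d) (Suc d) (\<lambda>(r, c). if r = 0 then Lform lam l c w else Lform lam (r - 1) c w)"
  have N: "N \<in> carrier_mat (Suc d) (Suc d)" by (simp add: N_def)
  have "row N 0 = row N (Suc l)"
    by (rule eq_vecI) (auto simp: N_def l)
  then have d0: "det N = 0"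
    by (intro det_identical_rows[OF N, of 0 "Suc l"]) (use l in auto)
  have md: "mat_delete N 0 j = mat d d (\<lambda>(i, c). Lform lam i (colj j c) w)" for j
    by (rule eq_matI) (auto simp: mat_delete_def N_def colj_def)
  have "det N = (\<Sum>j<Suc d. N $$ (0, j) * cofactor N 0 j)"
    by (rule laplace_expansion_row[OF N]) simp
  also have "\<dots> = (\<Sum>j<Suc d. Lform lam l j w * Fform d lam j w)"
  proof (rule sum.cong)
    fix j assume "j \<in> {..<Suc d}"
    then have "N $$ (0, j) = Lform lam l j w" by (simp add: N_def)
    moreover have "cofactor N 0 j = Fform d lam j w"
      unfolding cofactor_def md Fform_def colj_def by simp
    ultimately show "N $$ (0, j) * cofactor N 0 j = Lform lam l j w * Fform d lam j w" by simp
  qed simp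
  finally show ?thesis using d0 by (simp add: lessThan_Suc_atMost)
qed

lemma colj_inj: "inj_on (colj j) A"
  by (auto simp: inj_on_def colj_def split: if_splits)

lemma colj_image: "j \<le> d \<Longrightarrow> colj j ` {0..<d} = {..d} - {j}"
proof
  show "j \<le> d \<Longrightarrow> colj j ` {0..<d} \<subseteq> {..d} - {j}" by (auto simp: colj_def)
  show "j \<le> d \<Longrightarrow> {..d} - {j} \<subseteq> colj j ` {0..<d}"
  proof
    fix x assume "j \<le> d" "x \<in> {..d} - {j}"
    then show "x \<in> colj j ` {0..<d}"
    proof (cases "x < j")
      case True
      then have "colj j x = x" "x \<in> {0..<d}" using \<open>j \<le> d\<close> by (auto simp: colj_def)
      then show ?thesis by (metis imageI)
    next
      case False
      then have "x > j" using \<open>x \<in> {..d} - {j}\<close> by auto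
      then have "colj j (x - 1) = x" "x - 1 \<in> {0..<d}" using \<open>x \<in> {..d} - {j}\<close> by (auto simp: colj_def)
      then show ?thesis by (metis imageI)
    qed
  qed
qed

lemma sum_colj: fixes f :: "nat \<Rightarrow> 'a::ab_group_add" assumes "j \<le> d"
  shows "(\<Sum>c\<in>{0..<d}. f (colj j c)) = (\<Sum>c\<le>d. f c) - f j"
proof -
  have "(\<Sum>c\<in>{0..<d}. f (colj j c)) = (\<Sum>c\<in>colj j ` {0..<d}. f c)"
    by (simp add: sum.reindex colj_inj)
  also have "\<dots> = (\<Sum>c\<in>{..d} - {j}. f c)" using colj_image[OF assms] by simp
  also have "\<dots> = (\<Sum>c\<le>d. f c) - f j" using sum_diff1[of "{..d}" f j] assms by simp
  finally show ?thesis .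
qed

lemma det_kernel_zero:
  fixes A :: "'k::idom mat"
  assumes "A \<in> carrier_mat d d" "t \<in> carrier_vec d" "t \<noteq> 0\<^sub>v d" "A *\<^sub>v t = 0\<^sub>v d"
  shows "det A = 0"
  using det_0_iff_vec_prod_zero[OF assms(1)] assms by blast

lemma kernel_vec:
  fixes A :: "'k::idom mat"
  assumes "det A \<noteq> 0" "A \<in> carrier_mat d d" "t \<in> carrier_vec d" "A *\<^sub>v t = 0\<^sub>v d"
  shows "t = 0\<^sub>v d"
  using det_kernel_zero assms by blast

lemma kernel_F:
  fixes v :: "'k::field pt3"
  assumes ker: "\<forall>l<d. (\<Sum>j\<le>d. Lform lam l j v * b j) = 0"
    and j1: "j1 \<le> d" and F1: "Fform d lam j1 v \<noteq> 0"
  shows "\<forall>j\<le>d. b j = (b j1 / Fform d lam j1 v) * Fform d lam j v"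
proof -
  define \<kappa> where "\<kappa> = b j1 / Fform d lam j1 v"
  define \<tau> where "\<tau> j = b j - \<kappa> * Fform d lam j v" for j
  have kt: "(\<Sum>j\<le>d. Lform lam l j v * \<tau> j) = 0" if "l < d" for l
  proof -
    have "(\<Sum>j\<le>d. Lform lam l j v * \<tau> j) = (\<Sum>j\<le>d. Lform lam l j v * b j) - \<kappa> * (\<Sum>j\<le>d. Lform lam l j v * Fform d lam j v)"
      by (simp add: \<tau>_def algebra_simps sum_subtractf sum_distrib_left)
    then show ?thesis using ker LF_zero[OF that, of lam v] that by simp
  qed
  have t1: "\<tau> j1 = 0" using F1 by (simp add: \<tau>_def \<kappa>_def)
  define A where "A = mat d d (\<lambda>(l, c). Lform lam l (colj j1 c) v)"
  define t where "t = vec d (\<lambda>c. \<tau> (colj j1 c))"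
  have A: "A \<in> carrier_mat d d" by (simp add: A_def)
  have dA: "det A \<noteq> 0" using F1 unfolding Fform_def A_def colj_def by auto
  have "A *\<^sub>v t = 0\<^sub>v d"
  proof (rule eq_vecI)
    fix l assume l: "l < dim_vec (0\<^sub>v d :: 'k vec)"
    have "(A *\<^sub>v t) $ l = (\<Sum>c\<in>{0..<d}. Lform lam l (colj j1 c) v * \<tau> (colj j1 c))"
      using l by (simp add: A_def t_def mult_mat_vec_def scalar_prod_def)
    also have "\<dots> = (\<Sum>j\<le>d. Lform lam l j v * \<tau> j) - Lform lam l j1 v * \<tau> j1"
      by (rule sum_colj[OF j1])
    also have "\<dots> = 0" using kt l t1 by simp
    finally show "(A *\<^sub>v t) $ l = 0\<^sub>v d $ l" using l by simp
  qed (simp add: A_def)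
  then have t0: "t = 0\<^sub>v d" using kernel_vec[OF dA A] by (simp add: t_def)
  have "\<tau> j = 0" if jd: "j \<le> d" for j
  proof (cases "j = j1")
    case True then show ?thesis using t1 by simp
  next
    case False
    then obtain c where "c < d" "colj j1 c = j" using colj_image[OF j1] jd
    proof -
      have "j \<in> colj j1 ` {0..<d}" using colj_image[OF j1] jd False by auto
      then show ?thesis using that by auto
    qed
    then show ?thesis using t0 by (metis index_vec index_zero_vec(1) t_def)
  qed
  then show ?thesis by (simp add: \<tau>_def \<kappa>_def)
qed

lemma curve_closure:
  fixes x :: "nat \<times> nat \<Rightarrow> 'k::field_char_0" and P :: "nat \<times> nat \<Rightarrow> 'k poly"
  assumes C: "finite C" and x: "x \<in> proj_reps C"
    and P0: "\<forall>c\<in>C. poly (P c) 0 = x c"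
    and curve: "\<forall>e. e \<noteq> 0 \<longrightarrow> (\<exists>c\<in>C. poly (P c) e \<noteq> 0) \<longrightarrow>
        (\<exists>\<mu>. \<mu> \<noteq> 0 \<and> (\<lambda>c. if c \<in> C then \<mu> * poly (P c) e else 0) \<in> S)"
  shows "x \<in> proj_closure C (proj_reps C) S"
  unfolding proj_closure_def
proof (intro CollectI conjI allI impI ballI)
  show "x \<in> proj_reps C" by fact
  fix s G assume hp: "hom_poly C s G" and van: "\<forall>y\<in>S. G y = 0"
  obtain cf where cf: "\<forall>x. G x = (\<Sum>m\<in>expo C s. cf m * (\<Prod>i\<in>C. x i ^ m i))"
    using hp unfolding hom_poly_def by blast
  define Q where "Q = (\<Sum>m\<in>expo C s. smult (cf m) (\<Prod>i\<in>C. P i ^ m i))"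
  have key: "G y = \<mu> ^ s * poly Q e" if y: "\<forall>i\<in>C. y i = \<mu> * poly (P i) e" for y \<mu> e
  proof -
    have "G y = (\<Sum>m\<in>expo C s. cf m * (\<Prod>i\<in>C. (\<mu> * poly (P i) e) ^ m i))"
      using cf y by simp
    also have "\<dots> = (\<Sum>m\<in>expo C s. \<mu> ^ s * (cf m * (\<Prod>i\<in>C. poly (P i) e ^ m i)))"
    proof (rule sum.cong)
      fix m assume m: "m \<in> expo C s"
      then have ms: "(\<Sum>i\<in>C. m i) = s" by (simp add: expo_def)
      have "(\<Prod>i\<in>C. (\<mu> * poly (P i) e) ^ m i) = (\<Prod>i\<in>C. \<mu> ^ m i) * (\<Prod>i\<in>C. poly (P i) e ^ m i)"
        by (simp add: power_mult_distrib prod.distrib)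
      also have "(\<Prod>i\<in>C. \<mu> ^ m i) = \<mu> ^ s" using ms power_sum[of \<mu> m C] by simp
      finally show "cf m * (\<Prod>i\<in>C. (\<mu> * poly (P i) e) ^ m i) = \<mu> ^ s * (cf m * (\<Prod>i\<in>C. poly (P i) e ^ m i))"
        by simp
    qed simp
    also have "\<dots> = \<mu> ^ s * poly Q e"
      by (simp add: Q_def poly_sum poly_prod sum_distrib_left)
    finally show ?thesis .
  qed
  have Gx: "G x = poly Q 0" using key[of x 1 0] P0 by simp
  obtain c0 where c0: "c0 \<in> C" "x c0 \<noteq> 0" using x unfolding proj_reps_def by blast
  have Pc0: "P c0 \<noteq> 0" using P0 c0 by auto
  have fin: "finite {e. poly (P c0) e = 0}" using poly_roots_finite[OF Pc0] .
  have sub: "UNIV - insert 0 {e. poly (P c0) e = 0} \<subseteq> {e. poly Q e = 0}"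
  proof
    fix e assume e: "e \<in> UNIV - insert 0 {e. poly (P c0) e = 0}"
    then have "e \<noteq> 0" "\<exists>c\<in>C. poly (P c) e \<noteq> 0" using c0 by auto
    then obtain \<mu> where mu: "\<mu> \<noteq> 0" "(\<lambda>c. if c \<in> C then \<mu> * poly (P c) e else 0) \<in> S"
      using curve by blast
    then have "G (\<lambda>c. if c \<in> C then \<mu> * poly (P c) e else 0) = 0" using van by blast
    moreover have "G (\<lambda>c. if c \<in> C then \<mu> * poly (P c) e else 0) = \<mu> ^ s * poly Q e"
      by (rule key) simp
    ultimately show "e \<in> {e. poly Q e = 0}" using mu by simp
  qed
  have "infinite (UNIV - insert 0 {e. poly (P c0) e = 0} :: 'k set)"
    using infinite_UNIV_char_0 fin by (simp add: Diff_infinite_finite)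
  then have "infinite {e. poly Q e = 0}" using sub finite_subset by blast
  then have "Q = 0" using poly_roots_finite by blast
  then show "G x = 0" using Gx by simp
qed

definition dot :: "'k::comm_ring_1 pt3 \<Rightarrow> 'k pt3 \<Rightarrow> 'k" where
  "dot z w = fst z * fst w + fst (snd z) * fst (snd w) + snd (snd z) * snd (snd w)"

lemma dot_lin: "dot z (lin v e u) = dot z v + e * dot z u"
  by (simp add: dot_def lin_def algebra_simps)

lemma lin0: "lin v 0 u = v" by (simp add: lin_def)

definition mline :: "mexp \<Rightarrow> 'k::comm_ring_1 pt3 \<Rightarrow> 'k pt3 \<Rightarrow> 'k poly" where
  "mline a v u = [:fst v, fst u:] ^ fst a * [:fst (snd v), fst (snd u):] ^ fst (snd a) *
     [:snd (snd v), snd (snd u):] ^ snd (snd a)"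

lemma poly_mline: "poly (mline a v u) e = mon3 a (lin v e u)"
  by (simp add: mline_def mon3_def lin_def algebra_simps)

lemma polyfun_line:
  fixes A :: "'k::comm_ring_1 pt3 \<Rightarrow> 'k"
  assumes "poly_fun3 A" shows "\<exists>P. \<forall>e. A (lin v e u) = poly P e"
proof -
  obtain N c where Nc: "\<forall>w. A w = (\<Sum>a\<in>{a. mdeg a \<le> N}. c a * mon3 a w)"
    using assms unfolding poly_fun3_def by blast
  show ?thesis
    by (rule exI[of _ "\<Sum>a\<in>{a. mdeg a \<le> N}. smult (c a) (mline a v u)"])
       (simp add: Nc poly_sum poly_mline)
qed

lemma finite_mdeg_le: "finite {a. mdeg a \<le> N}"
  by (rule finite_subset[of _ "{..N} \<times> {..N} \<times> {..N}"]) (auto simp: mdeg_def)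

lemma hom_form3_poly_fun3: assumes "hom_form3 s G" shows "poly_fun3 G"
proof -
  obtain c where c: "\<forall>w. G w = (\<Sum>a\<in>mons_set s. c a * mon3 a w)"
    using assms unfolding hom_form3_def by blast
  have "G w = (\<Sum>a\<in>{a. mdeg a \<le> s}. (if mdeg a = s then c a else 0) * mon3 a w)" for w
  proof -
    have "(\<Sum>a\<in>{a. mdeg a \<le> s}. (if mdeg a = s then c a else 0) * mon3 a w)
        = (\<Sum>a\<in>mons_set s. (if mdeg a = s then c a else 0) * mon3 a w)"
      by (rule sum.mono_neutral_right) (auto simp: finite_mdeg_le mons_set_def)
    moreover have "G w = (\<Sum>a\<in>mons_set s. c a * mon3 a w)" using c by blast
    ultimately show ?thesis by (simp add: mons_set_def)
  qed
  then show ?thesis unfolding poly_fun3_def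
    by (intro exI[of _ s] exI[of _ "\<lambda>a. if mdeg a = s then c a else 0"]) blast
qed

lemma hom_form3_mult:
  fixes G H :: "'k::comm_ring_1 pt3 \<Rightarrow> 'k"
  assumes "hom_form3 s G" "hom_form3 r H"
  shows "hom_form3 (s + r) (\<lambda>w. G w * H w)"
proof -
  obtain c where c: "\<forall>w. G w = (\<Sum>a\<in>mons_set s. c a * mon3 a w)"
    using assms(1) unfolding hom_form3_def by blast
  obtain c' where c': "\<forall>w. H w = (\<Sum>a\<in>mons_set r. c' a * mon3 a w)"
    using assms(2) unfolding hom_form3_def by blast
  define S where "S = mons_set s \<times> mons_set r"
  define g where "g = (\<lambda>(a, b). madd a b)"
  define C where "C y = (\<Sum>p\<in>{p \<in> S. g p = y}. c (fst p) * c' (snd p))" for y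
  have fS: "finite S" by (simp add: S_def)
  have gS: "g ` S \<subseteq> mons_set (s + r)"
    by (auto simp: S_def g_def mons_set_def mdeg_madd)
  have "G w * H w = (\<Sum>y\<in>mons_set (s + r). C y * mon3 y w)" for w
  proof -
    have "G w * H w = (\<Sum>a\<in>mons_set s. c a * mon3 a w) * (\<Sum>b\<in>mons_set r. c' b * mon3 b w)"
      using c[rule_format, of w] c'[rule_format, of w] by simp
    also have "\<dots> = (\<Sum>p\<in>S. (c (fst p) * mon3 (fst p) w) * (c' (snd p) * mon3 (snd p) w))"
      unfolding S_def sum_product sum.cartesian_product by (simp add: case_prod_beta)
    also have "\<dots> = (\<Sum>p\<in>S. c (fst p) * c' (snd p) * mon3 (g p) w)"
      by (intro sum.cong refl) (simp add: g_def case_prod_beta mon3_madd algebra_simps)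
    finally have "G w * H w = (\<Sum>p\<in>S. c (fst p) * c' (snd p) * mon3 (g p) w)" .
    also have "\<dots> = (\<Sum>y\<in>mons_set (s + r). \<Sum>p\<in>{p \<in> S. g p = y}. c (fst p) * c' (snd p) * mon3 (g p) w)"
      by (rule sum.group[OF fS finite_mons_set gS, symmetric])
    also have "\<dots> = (\<Sum>y\<in>mons_set (s + r). C y * mon3 y w)"
      unfolding C_def sum_distrib_right by (intro sum.cong refl) auto
    finally show ?thesis .
  qed
  then show ?thesis unfolding hom_form3_def by blast
qed

lemma mons_set_0: "mons_set 0 = {(0,0,0)}"
  by (auto simp: mons_set_def mdeg_def)

lemma mons_set_1: "mons_set 1 = {(1,0,0),(0,1,0),(0,0,1)}"
  by (auto simp: mons_set_def mdeg_def)

lemma hom_form3_one: "hom_form3 0 (\<lambda>w. 1)"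
  unfolding hom_form3_def mons_set_0 by (auto simp: mon3_def intro: exI[of _ "\<lambda>_. 1"])

lemma hom_form3_dot: "hom_form3 1 (dot z)"
proof -
  define c where "c a = (if a = (1,0,0) then fst z else if a = (0,1,0) then fst (snd z) else snd (snd z))" for a :: mexp
  have "dot z w = (\<Sum>a\<in>mons_set 1. c a * mon3 a w)" for w
    unfolding mons_set_1 by (simp add: c_def dot_def mon3_def)
  then show ?thesis unfolding hom_form3_def by blast
qed

lemma hom_form3_prod:
  assumes "finite I"
  shows "hom_form3 (card I) (\<lambda>w. \<Prod>i\<in>I. dot (z i) w)"
  using assms
proof (induction I rule: finite_induct)
  case empty then show ?case using hom_form3_one by simp
next
  case (insert x F)
  have "hom_form3 (1 + card F) (\<lambda>w. dot (z x) w * (\<Prod>i\<in>F. dot (z i) w))"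
    by (rule hom_form3_mult[OF hom_form3_dot insert.IH])
  then show ?case using insert.hyps by simp
qed

lemma coeff_mult_1: "coeff (p * q) 1 = coeff p 0 * coeff q 1 + coeff p 1 * coeff q 0"
  by (simp add: coeff_mult atMost_Suc One_nat_def algebra_simps)

lemma coeff_FP1': "coeff (FP d lam j v u) (Suc 0) = Dd d lam j v u"
  using coeff_FP1 by (simp add: One_nat_def)

lemma dot_lc: "dot z (lc a u b w) = a * dot z u + b * dot z w"
  by (simp add: dot_def lc_def algebra_simps)

lemma ideal_deriv:
  fixes v :: "'k::field_char_0 pt3"
  assumes ideal: "ideal_generated_by X (d + 1) (Fform d lam)"
    and hf: "hom_form3 r h"
    and van: "\<forall>x\<in>X. dot z x * h x = 0"
    and zv: "dot z v = 0"
    and Fv: "\<forall>j\<le>d. Fform d lam j v = 0"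
  shows "\<exists>A0. \<forall>u. dot z u * h v = (\<Sum>j\<le>d. A0 j * Dd d lam j v u)"
proof -
  define G where "G w = dot z w * h w" for w
  have hG: "hom_form3 (1 + r) G" unfolding G_def by (rule hom_form3_mult[OF hom_form3_dot hf])
  have "\<forall>x\<in>X. G x = 0" using van by (simp add: G_def)
  then obtain A where A: "\<forall>j<d + 1. poly_fun3 (A j)" "\<forall>w. G w = (\<Sum>j<d + 1. A j w * Fform d lam j w)"
    using ideal hG unfolding ideal_generated_by_def by blast
  have "dot z u * h v = (\<Sum>j\<le>d. A j v * Dd d lam j v u)" for u
  proof -
    have "\<forall>j. \<exists>P. j < d + 1 \<longrightarrow> (\<forall>e. A j (lin v e u) = poly P e)"
      using A(1) polyfun_line by blast
    then obtain PA where PA: "\<And>j e. j < d + 1 \<Longrightarrow> A j (lin v e u) = poly (PA j) e" by metis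
    obtain H where H: "\<And>e. h (lin v e u) = poly H e"
      using polyfun_line[OF hom_form3_poly_fun3[OF hf]] by blast
    have "poly (smult (dot z u) (pCons 0 H)) e = poly (\<Sum>j<d + 1. PA j * FP d lam j v u) e" for e
    proof -
      have "poly (smult (dot z u) (pCons 0 H)) e = G (lin v e u)"
        by (simp add: G_def dot_lin zv H)
      also have "\<dots> = (\<Sum>j<d + 1. A j (lin v e u) * Fform d lam j (lin v e u))" using A(2) by blast
      also have "\<dots> = poly (\<Sum>j<d + 1. PA j * FP d lam j v u) e"
        by (simp add: poly_sum PA poly_FP)
      finally show ?thesis .
    qed
    then have eq: "smult (dot z u) (pCons 0 H) = (\<Sum>j<d + 1. PA j * FP d lam j v u)"
      using poly_eq_poly_eq_iff by blast
    have "coeff (smult (dot z u) (pCons 0 H)) 1 = dot z u * h v"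
      using H[of 0] by (simp add: lin0 poly_0_coeff_0)
    moreover have "coeff (\<Sum>j<d + 1. PA j * FP d lam j v u) 1 = (\<Sum>j\<le>d. A j v * Dd d lam j v u)"
    proof -
      have "coeff (\<Sum>j<d + 1. PA j * FP d lam j v u) 1 = (\<Sum>j<d + 1. coeff (PA j * FP d lam j v u) 1)"
        by (simp add: coeff_sum_poly)
      also have "\<dots> = (\<Sum>j<d + 1. A j v * Dd d lam j v u)"
      proof (rule sum.cong)
        fix j assume j: "j \<in> {..<d + 1}"
        have "coeff (PA j) 0 = A j v" using PA[of j 0] j by (simp add: lin0 poly_0_coeff_0)
        moreover have "coeff (FP d lam j v u) 0 = 0" using Fv j by (simp add: coeff_FP0)
        ultimately show "coeff (PA j * FP d lam j v u) 1 = A j v * Dd d lam j v u"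
          unfolding coeff_mult_1 coeff_FP1 by simp
      qed simp
      finally show ?thesis by (simp add: lessThan_Suc_atMost)
    qed
    ultimately show ?thesis using eq by metis
  qed
  then show ?thesis by (intro exI[of _ "\<lambda>j. A j v"]) blast
qed

lemma Dd_ker:
  fixes v :: "'k::field_char_0 pt3"
  assumes Fv: "\<forall>j\<le>d. Fform d lam j v = 0" and l: "l < d"
  shows "(\<Sum>j\<le>d. Lform lam l j v * Dd d lam j v u) = 0"
proof -
  have "poly (\<Sum>j\<le>d. [:Lform lam l j v, Lform lam l j u:] * FP d lam j v u) e = 0" for e
  proof -
    have "poly (\<Sum>j\<le>d. [:Lform lam l j v, Lform lam l j u:] * FP d lam j v u) e
        = (\<Sum>j\<le>d. Lform lam l j (lin v e u) * Fform d lam j (lin v e u))"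
      by (simp add: poly_sum poly_FP Lform_lin algebra_simps)
    then show ?thesis using LF_zero[OF l] by simp
  qed
  then have "(\<Sum>j\<le>d. [:Lform lam l j v, Lform lam l j u:] * FP d lam j v u) = 0"
    using poly_all_0_iff_0 by blast
  then have "coeff (\<Sum>j\<le>d. [:Lform lam l j v, Lform lam l j u:] * FP d lam j v u) 1 = 0" by simp
  then show ?thesis using Fv
    by (simp add: coeff_sum_poly coeff_mult_1 coeff_FP0 coeff_FP1 coeff_FP1' One_nat_def)
qed

lemma two_forms:
  fixes v :: "'k::field pt3"
  assumes "v \<noteq> (0,0,0)"
  shows "\<exists>z1 z2 u1 u2. dot z1 v = 0 \<and> dot z2 v = 0 \<and> dot z1 u1 = 1 \<and> dot z1 u2 = 0
     \<and> dot z2 u1 = 0 \<and> dot z2 u2 = 1"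
proof -
  obtain v1 v2 v3 where v: "v = (v1, v2, v3)" by (cases v) auto
  have "v1 \<noteq> 0 \<or> v2 \<noteq> 0 \<or> v3 \<noteq> 0" using assms v by auto
  moreover have ?thesis if "v1 \<noteq> 0"
    by (rule exI[of _ "(v2, -v1, 0)"], rule exI[of _ "(v3, 0, -v1)"],
        rule exI[of _ "(0, -1/v1, 0)"], rule exI[of _ "(0, 0, -1/v1)"])
      (use that in \<open>simp add: dot_def v field_simps\<close>)
  moreover have ?thesis if "v2 \<noteq> 0"
    by (rule exI[of _ "(-v2, v1, 0)"], rule exI[of _ "(0, v3, -v2)"],
        rule exI[of _ "(-1/v2, 0, 0)"], rule exI[of _ "(0, 0, -1/v2)"])
      (use that in \<open>simp add: dot_def v field_simps\<close>)
  moreover have ?thesis if "v3 \<noteq> 0"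
    by (rule exI[of _ "(-v3, 0, v1)"], rule exI[of _ "(0, -v3, v2)"],
        rule exI[of _ "(-1/v3, 0, 0)"], rule exI[of _ "(0, -1/v3, 0)"])
      (use that in \<open>simp add: dot_def v field_simps\<close>)
  ultimately show ?thesis by blast
qed

lemma sep1:
  fixes q v :: "'k::field pt3"
  assumes q: "q \<noteq> (0,0,0)" and nv: "\<not> (\<exists>c. v = (c * fst q, c * fst (snd q), c * snd (snd q)))"
  shows "\<exists>z. dot z q = 0 \<and> dot z v \<noteq> 0"
proof -
  obtain q1 q2 q3 where qq: "q = (q1, q2, q3)" by (cases q) auto
  obtain v1 v2 v3 where vv: "v = (v1, v2, v3)" by (cases v) auto
  have c: "q2 * v3 - q3 * v2 \<noteq> 0 \<or> q3 * v1 - q1 * v3 \<noteq> 0 \<or> q1 * v2 - q2 * v1 \<noteq> 0"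
  proof (rule ccontr)
    assume "\<not> ?thesis"
    then have e: "q2 * v3 = q3 * v2" "q3 * v1 = q1 * v3" "q1 * v2 = q2 * v1" by auto
    have "q1 \<noteq> 0 \<or> q2 \<noteq> 0 \<or> q3 \<noteq> 0" using q qq by auto
    moreover have False if "q1 \<noteq> 0"
      using nv[unfolded qq vv] e that
      by (metis (no_types, lifting) fst_conv nonzero_mult_div_cancel_left snd_conv times_divide_eq_left mult.commute)
    moreover have False if "q2 \<noteq> 0"
      using nv[unfolded qq vv] e that
      by (metis (no_types, lifting) fst_conv nonzero_mult_div_cancel_left snd_conv times_divide_eq_left mult.commute)
    moreover have False if "q3 \<noteq> 0"
      using nv[unfolded qq vv] e that
      by (metis (no_types, lifting) fst_conv nonzero_mult_div_cancel_left snd_conv times_divide_eq_left mult.commute)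
    ultimately show False by blast
  qed
  moreover have ?thesis if "q2 * v3 - q3 * v2 \<noteq> 0"
    by (rule exI[of _ "(0, -q3, q2)"]) (use that in \<open>simp add: dot_def qq vv algebra_simps\<close>)
  moreover have ?thesis if "q3 * v1 - q1 * v3 \<noteq> 0"
    by (rule exI[of _ "(q3, 0, -q1)"]) (use that in \<open>simp add: dot_def qq vv algebra_simps\<close>)
  moreover have ?thesis if "q1 * v2 - q2 * v1 \<noteq> 0"
    by (rule exI[of _ "(-q2, q1, 0)"]) (use that in \<open>simp add: dot_def qq vv algebra_simps\<close>)
  ultimately show ?thesis by blast
qed

lemma sep_form:
  fixes v :: "'k::field pt3"
  assumes X: "proj_point_set X" and v: "v \<noteq> (0,0,0)"
  shows "\<exists>r h. hom_form3 r h \<and> h v \<noteq> 0 \<and> (\<forall>x\<in>X. \<forall>z. dot z v = 0 \<longrightarrow> dot z x * h x = 0)"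
proof -
  define X' where "X' = {q\<in>X. \<not> (\<exists>c. v = (c * fst q, c * fst (snd q), c * snd (snd q)))}"
  have fin: "finite X'" using X unfolding proj_point_set_def X'_def by auto
  have "\<forall>q\<in>X'. \<exists>z. dot z q = 0 \<and> dot z v \<noteq> 0"
  proof
    fix q assume "q \<in> X'"
    then have "q \<noteq> (0,0,0)" "\<not> (\<exists>c. v = (c * fst q, c * fst (snd q), c * snd (snd q)))"
      using X unfolding X'_def proj_point_set_def by auto
    then show "\<exists>z. dot z q = 0 \<and> dot z v \<noteq> 0" by (rule sep1)
  qed
  then obtain zf where zf: "\<And>q. q \<in> X' \<Longrightarrow> dot (zf q) q = 0 \<and> dot (zf q) v \<noteq> 0" by metis
  define h where "h w = (\<Prod>q\<in>X'. dot (zf q) w)" for w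
  have hf: "hom_form3 (card X') h" unfolding h_def by (rule hom_form3_prod[OF fin])
  have hv: "h v \<noteq> 0" unfolding h_def using zf fin by (simp add: prod_zero_iff)
  have "dot z x * h x = 0" if x: "x \<in> X" and zv: "dot z v = 0" for x z
  proof (cases "x \<in> X'")
    case True
    have "dot (zf x) x = 0" using zf True by blast
    then have "h x = 0" unfolding h_def using fin True by (auto simp: prod_zero_iff)
    then show ?thesis by simp
  next
    case False
    then obtain c where c: "v = (c * fst x, c * fst (snd x), c * snd (snd x))" using x unfolding X'_def by auto
    then have "c \<noteq> 0" using v by auto
    moreover have "dot z v = c * dot z x" using c by (simp add: dot_def algebra_simps)
    ultimately show ?thesis using zv by simp
  qed
  then show ?thesis using hf hv by blast
qed

lemma three_var:
  fixes r1 r2 r3 s1 s2 s3 :: "'k::field"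
  shows "\<exists>a b c. (a \<noteq> 0 \<or> b \<noteq> 0 \<or> c \<noteq> 0) \<and> r1 * a + r2 * b + r3 * c = 0 \<and> s1 * a + s2 * b + s3 * c = 0"
proof -
  define c1 where "c1 = r2 * s3 - r3 * s2"
  define c2 where "c2 = r3 * s1 - r1 * s3"
  define c3 where "c3 = r1 * s2 - r2 * s1"
  have cr: "r1 * c1 + r2 * c2 + r3 * c3 = 0" "s1 * c1 + s2 * c2 + s3 * c3 = 0"
    by (simp_all add: c1_def c2_def c3_def algebra_simps)
  show ?thesis
  proof (cases "c1 \<noteq> 0 \<or> c2 \<noteq> 0 \<or> c3 \<noteq> 0")
    case True then show ?thesis using cr by blast
  next
    case False
    then have z: "c1 = 0" "c2 = 0" "c3 = 0" by auto
    show ?thesis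
    proof (cases "r1 \<noteq> 0 \<or> r2 \<noteq> 0")
      case True
      show ?thesis
        by (rule exI[of _ "-r2"], rule exI[of _ r1], rule exI[of _ 0])
          (use True z in \<open>auto simp: c3_def algebra_simps\<close>)
    next
      case F2: False
      show ?thesis
      proof (cases "r3 \<noteq> 0")
        case True
        show ?thesis
          by (rule exI[of _ 0], rule exI[of _ "-r3"], rule exI[of _ r2])
            (use True F2 z in \<open>auto simp: c1_def algebra_simps\<close>)
      next
        case False
        then have r0: "r1 = 0" "r2 = 0" "r3 = 0" using F2 by auto
        show ?thesis
        proof (cases "s1 \<noteq> 0 \<or> s2 \<noteq> 0")
          case True
          show ?thesis
            by (rule exI[of _ "-s2"], rule exI[of _ s1], rule exI[of _ 0])
              (use True r0 in \<open>auto simp: algebra_simps\<close>)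
        next
          case F3: False
          show ?thesis
          proof (cases "s3 \<noteq> 0")
            case True
            show ?thesis
              by (rule exI[of _ 0], rule exI[of _ "-s3"], rule exI[of _ s2])
                (use F3 r0 True in \<open>auto simp: algebra_simps\<close>)
          next
            case False
            show ?thesis
              by (rule exI[of _ 1], rule exI[of _ 0], rule exI[of _ 0])
                (use F3 r0 False in \<open>auto simp: algebra_simps\<close>)
          qed
        qed
      qed
    qed
  qed
qed

definition Ai :: "nat \<Rightarrow> (nat \<Rightarrow> nat \<Rightarrow> nat \<Rightarrow> 'k) \<Rightarrow> nat \<Rightarrow> 'k::comm_ring_1 pt3 \<Rightarrow> 'k pt3 \<Rightarrow> nat \<Rightarrow> 'k mat" where
  "Ai d lam j v u i = mat d d (\<lambda>(l, c). if l = i then Lform lam l (colj j c) u else Lform lam l (colj j c) v)"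

lemma Dd_det: "Dd d lam j v u = (-1) ^ j * (\<Sum>i\<in>{0..<d}. det (Ai d lam j v u i))"
proof -
  have di: "det (Ai d lam j v u i) = (\<Sum>p\<in>perms d. signof p * (Lform lam i (colj j (p i)) u *
      (\<Prod>i'\<in>{0..<d} - {i}. Lform lam i' (colj j (p i')) v)))" if i: "i \<in> {0..<d}" for i
    unfolding Ai_def det_leibniz
  proof (rule sum.cong[OF refl])
    fix p assume "p \<in> perms d"
    have "(\<Prod>i'=0..<d. (case (i', p i') of (l, c) \<Rightarrow> if l = i then Lform lam l (colj j c) u else Lform lam l (colj j c) v))
      = (\<Prod>i'\<in>{0..<d}. (if i' = i then Lform lam i' (colj j (p i')) u else Lform lam i' (colj j (p i')) v))"
      by simp
    also have "\<dots> = Lform lam i (colj j (p i)) u * (\<Prod>i'\<in>{0..<d} - {i}. (if i' = i then Lform lam i' (colj j (p i')) u else Lform lam i' (colj j (p i')) v))"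
      using prod.remove[OF _ i, of "\<lambda>i'. if i' = i then Lform lam i' (colj j (p i')) u else Lform lam i' (colj j (p i')) v"] by simp
    also have "(\<Prod>i'\<in>{0..<d} - {i}. (if i' = i then Lform lam i' (colj j (p i')) u else Lform lam i' (colj j (p i')) v))
       = (\<Prod>i'\<in>{0..<d} - {i}. Lform lam i' (colj j (p i')) v)"
      by (rule prod.cong) auto
    finally show "signof p * (\<Prod>i'=0..<d. (case (i', p i') of (l, c) \<Rightarrow> if l = i then Lform lam l (colj j c) u else Lform lam l (colj j c) v))
      = signof p * (Lform lam i (colj j (p i)) u * (\<Prod>i'\<in>{0..<d} - {i}. Lform lam i' (colj j (p i')) v))"
      by simp
  qed
  have "(\<Sum>i\<in>{0..<d}. det (Ai d lam j v u i)) = (\<Sum>i\<in>{0..<d}. \<Sum>p\<in>perms d. signof p * (Lform lam i (colj j (p i)) u *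
      (\<Prod>i'\<in>{0..<d} - {i}. Lform lam i' (colj j (p i')) v)))"
    using di by simp
  also have "\<dots> = (\<Sum>p\<in>perms d. \<Sum>i\<in>{0..<d}. signof p * (Lform lam i (colj j (p i)) u *
      (\<Prod>i'\<in>{0..<d} - {i}. Lform lam i' (colj j (p i')) v)))"
    by (rule sum.swap)
  also have "\<dots> = (\<Sum>p\<in>perms d. signof p * (\<Sum>i\<in>{0..<d}. Lform lam i (colj j (p i)) u *
      (\<Prod>i'\<in>{0..<d} - {i}. Lform lam i' (colj j (p i')) v)))"
    by (simp add: sum_distrib_left)
  finally show ?thesis unfolding Dd_def by simp
qed

lemma sum_colj_mult:
  fixes f \<tau> :: "nat \<Rightarrow> 'k::comm_ring_1"
  assumes "j \<le> d" "\<tau> j = 0"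
  shows "(\<Sum>c\<in>{0..<d}. f (colj j c) * \<tau> (colj j c)) = (\<Sum>c\<le>d. f c * \<tau> c)"
  using sum_colj[OF assms(1), of "\<lambda>c. f c * \<tau> c"] assms(2) by simp

lemma corank:
  fixes v :: "'k::field pt3"
  assumes kb: "\<forall>l<d. (\<Sum>j\<le>d. Lform lam l j v * b j) = 0"
    and kp: "\<forall>l<d. (\<Sum>j\<le>d. Lform lam l j v * p j) = 0"
    and kq: "\<forall>l<d. (\<Sum>j\<le>d. Lform lam l j v * q j) = 0"
    and indep: "\<forall>\<alpha> \<beta> \<gamma>. (\<forall>j\<le>d. \<alpha> * b j + \<beta> * p j + \<gamma> * q j = 0) \<longrightarrow> \<alpha> = 0 \<and> \<beta> = 0 \<and> \<gamma> = 0"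
    and j: "j \<le> d"
  shows "Dd d lam j v u = 0"
proof -
  have "det (Ai d lam j v u i) = 0" if i: "i < d" for i
  proof -
    let ?Lu = "\<lambda>c. Lform lam i c u"
    obtain \<alpha> \<beta> \<gamma> where abc: "\<alpha> \<noteq> 0 \<or> \<beta> \<noteq> 0 \<or> \<gamma> \<noteq> 0"
      "b j * \<alpha> + p j * \<beta> + q j * \<gamma> = 0"
      "(\<Sum>c\<le>d. ?Lu c * b c) * \<alpha> + (\<Sum>c\<le>d. ?Lu c * p c) * \<beta> + (\<Sum>c\<le>d. ?Lu c * q c) * \<gamma> = 0"
      using three_var by blast
    define \<tau> where "\<tau> c = \<alpha> * b c + \<beta> * p c + \<gamma> * q c" for c
    have tj: "\<tau> j = 0" using abc(2) by (simp add: \<tau>_def algebra_simps)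
    have tu: "(\<Sum>c\<le>d. ?Lu c * \<tau> c) = 0"
    proof -
      have "(\<Sum>c\<le>d. ?Lu c * \<tau> c) = (\<Sum>c\<le>d. ?Lu c * b c) * \<alpha> + (\<Sum>c\<le>d. ?Lu c * p c) * \<beta> + (\<Sum>c\<le>d. ?Lu c * q c) * \<gamma>"
        by (simp add: \<tau>_def algebra_simps sum.distrib sum_distrib_left sum_distrib_right)
      then show ?thesis using abc(3) by simp
    qed
    have tv: "(\<Sum>c\<le>d. Lform lam l c v * \<tau> c) = 0" if l: "l < d" for l
    proof -
      have "(\<Sum>c\<le>d. Lform lam l c v * \<tau> c) = \<alpha> * (\<Sum>c\<le>d. Lform lam l c v * b c) + \<beta> * (\<Sum>c\<le>d. Lform lam l c v * p c) + \<gamma> * (\<Sum>c\<le>d. Lform lam l c v * q c)"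
        by (simp add: \<tau>_def algebra_simps sum.distrib sum_distrib_left)
      then show ?thesis using kb kp kq l by simp
    qed
    obtain j' where j': "j' \<le> d" "\<tau> j' \<noteq> 0"
      using indep abc(1) unfolding \<tau>_def by blast
    have "j' \<noteq> j" using tj j' by auto
    then obtain c' where c': "c' < d" "colj j c' = j'"
      using colj_image[OF j] j' by (metis DiffI atLeastLessThan_iff atMost_iff imageE le0 singletonD)
    define t where "t = vec d (\<lambda>c. \<tau> (colj j c))"
    have A: "Ai d lam j v u i \<in> carrier_mat d d" by (simp add: Ai_def)
    have tne: "t \<noteq> 0\<^sub>v d"
    proof
      assume "t = 0\<^sub>v d"
      then have "t $ c' = 0" using c' by simp
      then show False using c' j' by (simp add: t_def)
    qed
    have "Ai d lam j v u i *\<^sub>v t = 0\<^sub>v d"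
    proof (rule eq_vecI)
      fix l assume l: "l < dim_vec (0\<^sub>v d :: 'k vec)"
      then have l': "l < d" by simp
      have "(Ai d lam j v u i *\<^sub>v t) $ l = (\<Sum>c\<in>{0..<d}. (if l = i then Lform lam l (colj j c) u else Lform lam l (colj j c) v) * \<tau> (colj j c))"
        using l by (simp add: Ai_def t_def mult_mat_vec_def scalar_prod_def)
      also have "\<dots> = 0"
      proof (cases "l = i")
        case True
        then show ?thesis using sum_colj_mult[of j d \<tau> "\<lambda>c. Lform lam i c u"] j tj tu by simp
      next
        case False
        then show ?thesis using sum_colj_mult[of j d \<tau> "\<lambda>c. Lform lam l c v"] j tj tv[OF l'] by simp
      qed
      finally show "(Ai d lam j v u i *\<^sub>v t) $ l = 0\<^sub>v d $ l" using l by simp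
    qed (simp add: Ai_def)
    then show ?thesis using det_kernel_zero[OF A _ tne] by (simp add: t_def)
  qed
  then show ?thesis unfolding Dd_det by simp
qed

lemma exceptional:
  fixes v :: "'k::field_char_0 pt3"
  assumes X: "proj_point_set X" and ideal: "ideal_generated_by X (d + 1) (Fform d lam)"
    and v: "v \<noteq> (0,0,0)" and Fv: "\<forall>j\<le>d. Fform d lam j v = 0"
    and kb: "\<forall>l<d. (\<Sum>j\<le>d. Lform lam l j v * b j) = 0"
  shows "\<exists>u. \<forall>j\<le>d. Dd d lam j v u = b j"
proof -
  obtain z1 z2 u1 u2 where zu: "dot z1 v = 0" "dot z2 v = 0" "dot z1 u1 = 1" "dot z1 u2 = 0"
     "dot z2 u1 = 0" "dot z2 u2 = 1" using two_forms[OF v] by blast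
  obtain r h where h: "hom_form3 r h" "h v \<noteq> 0" "\<forall>x\<in>X. \<forall>z. dot z v = 0 \<longrightarrow> dot z x * h x = 0"
    using sep_form[OF X v] by blast
  have van1: "\<forall>x\<in>X. dot z1 x * h x = 0" using h(3) zu(1) by blast
  have van2: "\<forall>x\<in>X. dot z2 x * h x = 0" using h(3) zu(2) by blast
  obtain A1 where A1: "\<forall>u. dot z1 u * h v = (\<Sum>j\<le>d. A1 j * Dd d lam j v u)"
    using ideal_deriv[OF ideal h(1) van1 zu(1) Fv] by blast
  obtain A2 where A2: "\<forall>u. dot z2 u * h v = (\<Sum>j\<le>d. A2 j * Dd d lam j v u)"
    using ideal_deriv[OF ideal h(1) van2 zu(2) Fv] by blast
  define p where "p j = Dd d lam j v u1" for j
  define q where "q j = Dd d lam j v u2" for j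
  have kp: "\<forall>l<d. (\<Sum>j\<le>d. Lform lam l j v * p j) = 0" unfolding p_def using Dd_ker[OF Fv] by blast
  have kq: "\<forall>l<d. (\<Sum>j\<le>d. Lform lam l j v * q j) = 0" unfolding q_def using Dd_ker[OF Fv] by blast
  have indep2: "\<beta> = 0 \<and> \<gamma> = 0" if bg: "\<forall>j\<le>d. \<beta> * p j + \<gamma> * q j = 0" for \<beta> \<gamma>
  proof -
    have D0: "Dd d lam j v (lc \<beta> u1 \<gamma> u2) = 0" if "j \<le> d" for j
      using bg that by (simp add: Dd_lc p_def q_def)
    have "dot z1 (lc \<beta> u1 \<gamma> u2) * h v = 0" using A1[rule_format, of "lc \<beta> u1 \<gamma> u2"] D0 by simp
    then have "\<beta> = 0" using h(2) zu by (simp add: dot_lc)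
    moreover have "dot z2 (lc \<beta> u1 \<gamma> u2) * h v = 0" using A2[rule_format, of "lc \<beta> u1 \<gamma> u2"] D0 by simp
    then have "\<gamma> = 0" using h(2) zu by (simp add: dot_lc)
    ultimately show ?thesis by simp
  qed
  show ?thesis
  proof (cases "\<exists>\<beta> \<gamma>. \<forall>j\<le>d. b j = \<beta> * p j + \<gamma> * q j")
    case True
    then obtain \<beta> \<gamma> where bg: "\<forall>j\<le>d. b j = \<beta> * p j + \<gamma> * q j" by blast
    have "\<forall>j\<le>d. Dd d lam j v (lc \<beta> u1 \<gamma> u2) = b j"
    proof (intro allI impI)
      fix j assume "j \<le> d"
      then have "b j = \<beta> * p j + \<gamma> * q j" using bg by blast
      then show "Dd d lam j v (lc \<beta> u1 \<gamma> u2) = b j" by (simp only: Dd_lc p_def q_def)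
    qed
    then show ?thesis by blast
  next
    case False
    have indep: "\<forall>\<alpha> \<beta> \<gamma>. (\<forall>j\<le>d. \<alpha> * b j + \<beta> * p j + \<gamma> * q j = 0) \<longrightarrow> \<alpha> = 0 \<and> \<beta> = 0 \<and> \<gamma> = 0"
    proof (intro allI impI)
      fix \<alpha> \<beta> \<gamma> assume e: "\<forall>j\<le>d. \<alpha> * b j + \<beta> * p j + \<gamma> * q j = 0"
      have a0: "\<alpha> = 0"
      proof (rule ccontr)
        assume a: "\<alpha> \<noteq> 0"
        have "\<forall>j\<le>d. b j = (- \<beta> / \<alpha>) * p j + (- \<gamma> / \<alpha>) * q j"
        proof (intro allI impI)
          fix j assume "j \<le> d"
          then have e1: "\<alpha> * b j + \<beta> * p j + \<gamma> * q j = 0" using e by blast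
          have "b j = (\<alpha> * b j) / \<alpha>" using a by simp
          also have "\<alpha> * b j = - (\<beta> * p j + \<gamma> * q j)" using e1 by (simp add: add_eq_0_iff2 add.assoc)
          finally show "b j = (- \<beta> / \<alpha>) * p j + (- \<gamma> / \<alpha>) * q j" by (simp add: divide_simps)
        qed
        then show False using False by blast
      qed
      have "\<forall>j\<le>d. \<beta> * p j + \<gamma> * q j = 0" using e a0 by simp
      then have "\<beta> = 0 \<and> \<gamma> = 0" by (rule indep2)
      then show "\<alpha> = 0 \<and> \<beta> = 0 \<and> \<gamma> = 0" using a0 by simp
    qed
    have "\<forall>j\<le>d. 1 * p j + 0 * q j = 0"
      using corank[OF kb kp kq indep] by (simp add: p_def)
    then have "(1::'k) = 0 \<and> (0::'k) = 0" by (rule indep2)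
    then show ?thesis by simp
  qed
qed

definition nek :: "nat \<Rightarrow> nat \<Rightarrow> mexp" where
  "nek m k = (if k = 0 then (m,0,0) else if k = 1 then (0,m,0) else (0,0,m))"

lemma nek_in: "nek m k \<in> mons_set m" by (simp add: nek_def mons_set_def mdeg_def)

lemma mon3_nek: "k < 3 \<Longrightarrow> mon3 (nek m k) v = coord v k ^ m"
  by (auto simp: nek_def mon3_def coord_def)

lemma mdeg_comp: "mdeg a = mcomp a 0 + mcomp a 1 + mcomp a 2"
  by (simp add: mdeg_def mcomp_def)

lemma comp_ek3: "k < 3 \<Longrightarrow> m < 3 \<Longrightarrow> mcomp (ek k) m = (if m = k then 1 else 0)"
  by (auto simp: mcomp_def ek_def)

lemma comp_full: assumes "k0 < 3" "mdeg g = n" "mcomp g k0 = n" shows "g = nek n k0"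
proof -
  obtain x y z where g: "g = (x, y, z)" by (cases g) auto
  have "k0 = 0 \<or> k0 = 1 \<or> k0 = 2" using assms(1) by auto
  then show ?thesis using assms(2,3) g by (auto simp: nek_def mcomp_def mdeg_def)
qed

lemma comp_other: assumes "k0 < 3" "mdeg g = n" "mcomp g k0 < n"
  shows "\<exists>k<3. k \<noteq> k0 \<and> mcomp g k > 0"
proof -
  obtain x y z where g: "g = (x, y, z)" by (cases g) auto
  have "k0 = 0 \<or> k0 = 1 \<or> k0 = 2" using assms(1) by auto
  moreover have ?thesis if "k0 = 0"
  proof -
    have "y > 0 \<or> z > 0" using assms(2,3) g that by (auto simp: mcomp_def mdeg_def)
    then show ?thesis using that g
      by (intro exI[of _ "if y > 0 then 1 else 2"]) (auto simp: mcomp_def)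
  qed
  moreover have ?thesis if "k0 = 1"
  proof -
    have "x > 0 \<or> z > 0" using assms(2,3) g that by (auto simp: mcomp_def mdeg_def)
    then show ?thesis using that g
      by (intro exI[of _ "if x > 0 then 0 else 2"]) (auto simp: mcomp_def)
  qed
  moreover have ?thesis if "k0 = 2"
  proof -
    have "x > 0 \<or> y > 0" using assms(2,3) g that by (auto simp: mcomp_def mdeg_def)
    then show ?thesis using that g
      by (intro exI[of _ "if x > 0 then 0 else 1"]) (auto simp: mcomp_def)
  qed
  ultimately show ?thesis by blast
qed

lemma veronese:
  fixes a :: "mexp \<Rightarrow> 'k::field"
  assumes n: "n \<ge> 1"
    and cat: "\<forall>k1<3. \<forall>k2<3. \<forall>b1\<in>mons_set (n - 1). \<forall>b2\<in>mons_set (n - 1).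
        a (madd b1 (ek k1)) * a (madd b2 (ek k2)) - a (madd b2 (ek k1)) * a (madd b1 (ek k2)) = 0"
    and a0: "\<alpha>0 \<in> mons_set n" "a \<alpha>0 \<noteq> 0"
  shows "\<exists>v c. v \<noteq> (0,0,0) \<and> (\<forall>\<alpha>\<in>mons_set n. a \<alpha> = c * mon3 \<alpha> v)"
proof -
  obtain k0 \<beta>0 where k0: "k0 < 3" "\<beta>0 \<in> mons_set (n - 1)" "\<alpha>0 = madd \<beta>0 (ek k0)"
    using decomp_mons[OF a0(1) n] by blast
  define r where "r k = a (madd \<beta>0 (ek k))" for k
  define \<rho> where "\<rho> = r k0"
  have rho: "\<rho> \<noteq> 0" using a0 k0 by (simp add: \<rho>_def r_def)
  define v where "v = (r 0, r 1, r 2)"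
  have cv: "coord v k = r k" if "k < 3" for k
  proof -
    have "k = 0 \<or> k = 1 \<or> k = 2" using that by auto
    then show ?thesis by (auto simp: coord_def v_def)
  qed
  have rel: "a (madd \<beta> (ek k)) * \<rho> = r k * a (madd \<beta> (ek k0))" if "\<beta> \<in> mons_set (n - 1)" "k < 3" for \<beta> k
    using cat that k0 unfolding r_def \<rho>_def by (metis eq_iff_diff_eq_0 mult.commute)
  define E where "E = a (nek n k0)"
  have main: "\<forall>g. g \<in> mons_set n \<longrightarrow> n - mcomp g k0 = m \<longrightarrow> a g * \<rho> ^ n = E * mon3 g v" for m
  proof (induction m)
    case 0
    show ?case
    proof (intro allI impI)
      fix g assume g: "g \<in> mons_set n" "n - mcomp g k0 = 0"
      have "k0 = 0 \<or> k0 = 1 \<or> k0 = 2" using k0(1) by auto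
      then have "mcomp g k0 \<le> mdeg g" by (elim disjE) (simp_all add: mdeg_comp)
      then have "mcomp g k0 = n" using g by (simp add: mons_set_def)
      moreover have "mdeg g = n" using g by (simp add: mons_set_def)
      ultimately have "g = nek n k0" using comp_full[OF k0(1)] by blast
      then show "a g * \<rho> ^ n = E * mon3 g v" using k0(1) by (simp add: E_def mon3_nek cv \<rho>_def)
    qed
  next
    case (Suc m)
    show ?case
    proof (intro allI impI)
      fix g assume g: "g \<in> mons_set n" "n - mcomp g k0 = Suc m"
      then have "mcomp g k0 < n" by simp
      moreover have "mdeg g = n" using g by (simp add: mons_set_def)
      ultimately obtain k where k: "k < 3" "k \<noteq> k0" "mcomp g k > 0" using comp_other[OF k0(1)] by blast
      define \<beta> where "\<beta> = msub g k"
      have gb: "g = madd \<beta> (ek k)" using msub_madd[OF k(3,1)] by (simp add: \<beta>_def)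
      have b: "\<beta> \<in> mons_set (n - 1)" using mdeg_msub[OF k(3,1)] g by (simp add: \<beta>_def mons_set_def)
      define g' where "g' = madd \<beta> (ek k0)"
      have g': "g' \<in> mons_set n" using madd_ek_in[OF b n] by (simp add: g'_def)
      have "mcomp g' k0 = mcomp g k0 + 1" using k k0(1)
        by (simp add: g'_def gb comp_madd comp_ek3)
      then have "n - mcomp g' k0 = m" using g by simp
      then have IH: "a g' * \<rho> ^ n = E * mon3 g' v" using Suc.IH g' by blast
      have "a g * \<rho> ^ n * \<rho> = r k * (a g' * \<rho> ^ n)"
        using rel[OF b k(1)] by (simp add: gb g'_def algebra_simps)
      also have "\<dots> = E * mon3 g v * \<rho>"
        using IH k k0(1) by (simp add: gb g'_def mon3_madd mon3_ek cv \<rho>_def algebra_simps)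
      finally show "a g * \<rho> ^ n = E * mon3 g v" using rho by simp
    qed
  qed
  have "\<forall>\<alpha>\<in>mons_set n. a \<alpha> = (E / \<rho> ^ n) * mon3 \<alpha> v"
  proof
    fix \<alpha> assume "\<alpha> \<in> mons_set n"
    then have "a \<alpha> * \<rho> ^ n = E * mon3 \<alpha> v" using main by blast
    then show "a \<alpha> = (E / \<rho> ^ n) * mon3 \<alpha> v" using rho by (simp add: field_simps)
  qed
  moreover have "v \<noteq> (0,0,0)"
  proof
    assume "v = (0,0,0)"
    then have "coord v k0 = 0" by (simp add: coord_def)
    then show False using cv[OF k0(1)] rho by (simp add: \<rho>_def)
  qed
  ultimately show ?thesis by blast
qed

lemma finite_expo: assumes "finite C" shows "finite (expo C s)"
proof -
  have "expo C s \<subseteq> {f. \<forall>x. (x \<in> C \<longrightarrow> f x \<in> {..s}) \<and> (x \<notin> C \<longrightarrow> f x = 0)}"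
  proof
    fix m assume m: "m \<in> expo C s"
    have "m x \<le> s" if "x \<in> C" for x
      using m that assms member_le_sum[of x C m] by (auto simp: expo_def)
    then show "m \<in> {f. \<forall>x. (x \<in> C \<longrightarrow> f x \<in> {..s}) \<and> (x \<notin> C \<longrightarrow> f x = 0)}"
      using m by (auto simp: expo_def)
  qed
  then show ?thesis using finite_set_of_finite_funs[OF assms, of "{..s}" 0] finite_subset by blast
qed

lemma hom_poly_add:
  assumes "hom_poly C s f" "hom_poly C s g"
  shows "hom_poly C s (\<lambda>x. a * f x + b * g x)"
proof -
  obtain c where c: "\<forall>x. f x = (\<Sum>m\<in>expo C s. c m * (\<Prod>i\<in>C. x i ^ m i))" using assms(1) unfolding hom_poly_def by blast
  obtain c' where c': "\<forall>x. g x = (\<Sum>m\<in>expo C s. c' m * (\<Prod>i\<in>C. x i ^ m i))" using assms(2) unfolding hom_poly_def by blast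
  have eq: "\<forall>x. a * f x + b * g x = (\<Sum>m\<in>expo C s. (a * c m + b * c' m) * (\<Prod>i\<in>C. x i ^ m i))"
    using c c' by (simp add: sum_distrib_left sum.distrib algebra_simps)
  show ?thesis unfolding hom_poly_def by (rule exI[of _ "\<lambda>m. a * c m + b * c' m"]) (rule eq)
qed

lemma hom_poly_zero: "hom_poly C s (\<lambda>x. 0)"
  unfolding hom_poly_def by (rule exI[of _ "\<lambda>_. 0"]) simp

lemma hom_poly_sum:
  assumes "finite I" "\<forall>i\<in>I. hom_poly C s (f i)"
  shows "hom_poly C s (\<lambda>x. \<Sum>i\<in>I. f i x)"
  using assms
proof (induction I rule: finite_induct)
  case empty then show ?case using hom_poly_zero by simp
next
  case (insert y F)
  then have "hom_poly C s (\<lambda>x. 1 * f y x + 1 * (\<Sum>i\<in>F. f i x))"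
    by (intro hom_poly_add) auto
  then show ?case using insert.hyps by simp
qed

lemma hom_poly_mono:
  fixes C :: "'a set"
  assumes C: "finite C" and m0: "m0 \<in> expo C s"
  shows "hom_poly C s (\<lambda>x :: 'a \<Rightarrow> 'b::comm_semiring_1. \<Prod>i\<in>C. x i ^ m0 i)"
proof -
  have eq: "(\<Prod>i\<in>C. x i ^ m0 i) = (\<Sum>m\<in>expo C s. (if m = m0 then 1 else 0) * (\<Prod>i\<in>C. x i ^ m i))"
    for x :: "'a \<Rightarrow> 'b"
  proof -
    have "(\<Sum>m\<in>expo C s. (if m = m0 then 1 else 0) * (\<Prod>i\<in>C. x i ^ m i))
        = (\<Sum>m\<in>expo C s. if m = m0 then (\<Prod>i\<in>C. x i ^ m i) else 0)"
      by (rule sum.cong) auto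
    also have "\<dots> = (\<Prod>i\<in>C. x i ^ m0 i)" using finite_expo[OF C] m0 by simp
    finally show ?thesis by simp
  qed
  show ?thesis unfolding hom_poly_def by (rule exI[of _ "\<lambda>m. if m = m0 then 1 else 0"]) (intro allI eq)
qed

definition dl :: "'i \<Rightarrow> 'i \<Rightarrow> nat" where "dl c i = (if i = c then 1 else 0)"

lemma prod_dl: "finite C \<Longrightarrow> c \<in> C \<Longrightarrow> (\<Prod>i\<in>C. (x i :: 'k::comm_semiring_1) ^ dl c i) = x c"
proof -
  assume "finite C" "c \<in> C"
  have "(\<Prod>i\<in>C. x i ^ dl c i) = (\<Prod>i\<in>C. if i = c then x i else 1)"
    by (rule prod.cong) (auto simp: dl_def)
  then show ?thesis using \<open>finite C\<close> \<open>c \<in> C\<close> by simp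
qed

lemma hom_poly_var: fixes C :: "'a set" assumes "finite C" "c \<in> C"
  shows "hom_poly C 1 (\<lambda>x :: 'a \<Rightarrow> 'b::comm_semiring_1. x c)"
proof -
  have "dl c \<in> expo C 1" using assms by (simp add: expo_def dl_def)
  then have "hom_poly C 1 (\<lambda>x :: 'a \<Rightarrow> 'b. \<Prod>i\<in>C. x i ^ dl c i)" by (rule hom_poly_mono[OF assms(1)])
  moreover have "(\<lambda>x :: 'a \<Rightarrow> 'b. \<Prod>i\<in>C. x i ^ dl c i) = (\<lambda>x. x c)"
    by (intro ext) (rule prod_dl[OF assms])
  ultimately show ?thesis by simp
qed

lemma hom_poly_var2: fixes C :: "'a set" assumes "finite C" "c1 \<in> C" "c2 \<in> C"
  shows "hom_poly C 2 (\<lambda>x :: 'a \<Rightarrow> 'b::comm_semiring_1. x c1 * x c2)"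
proof -
  define m where "m i = dl c1 i + dl c2 i" for i
  have "(\<Sum>i\<in>C. m i) = 2" using assms by (simp add: m_def sum.distrib dl_def)
  then have "m \<in> expo C 2" using assms by (auto simp: expo_def m_def dl_def)
  then have "hom_poly C 2 (\<lambda>x :: 'a \<Rightarrow> 'b. \<Prod>i\<in>C. x i ^ m i)" by (rule hom_poly_mono[OF assms(1)])
  moreover have "(\<lambda>x :: 'a \<Rightarrow> 'b. \<Prod>i\<in>C. x i ^ m i) = (\<lambda>x. x c1 * x c2)"
    unfolding m_def power_add prod.distrib by (intro ext) (simp add: prod_dl[OF assms(1,2)] prod_dl[OF assms(1,3)])
  ultimately show ?thesis by simp
qed

lemma hom_poly_minor: fixes C :: "'a set" assumes "finite C" "c1 \<in> C" "c2 \<in> C" "c3 \<in> C" "c4 \<in> C"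
  shows "hom_poly C 2 (\<lambda>x :: 'a \<Rightarrow> 'b::comm_ring_1. x c1 * x c2 - x c3 * x c4)"
proof -
  have "hom_poly C 2 (\<lambda>x :: 'a \<Rightarrow> 'b. 1 * (x c1 * x c2) + (-1) * (x c3 * x c4))"
    by (rule hom_poly_add[OF hom_poly_var2[OF assms(1,2,3)] hom_poly_var2[OF assms(1,4,5)]])
  moreover have "(\<lambda>x :: 'a \<Rightarrow> 'b. 1 * (x c1 * x c2) + (-1) * (x c3 * x c4)) = (\<lambda>x. x c1 * x c2 - x c3 * x c4)"
    by (intro ext) simp
  ultimately show ?thesis by simp
qed

lemma E_sum:
  fixes g :: "mexp \<Rightarrow> 'k::comm_ring_1"
  assumes b: "b \<in> mons_set (n - 1)" and n: "n \<ge> 1"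
  shows "(\<Sum>\<alpha>\<in>mons_set n. Ementry lam (b, l) (\<alpha>, j) * g \<alpha>) = (\<Sum>k<3. lam l j k * g (madd b (ek k)))"
proof -
  define T where "T = (\<lambda>k. madd b (ek k)) ` {..<3}"
  have T: "T \<subseteq> mons_set n" using madd_ek_in[OF b n] by (auto simp: T_def)
  have "(\<Sum>\<alpha>\<in>mons_set n. Ementry lam (b, l) (\<alpha>, j) * g \<alpha>) = (\<Sum>\<alpha>\<in>T. Ementry lam (b, l) (\<alpha>, j) * g \<alpha>)"
    by (rule sum.mono_neutral_right[OF finite_mons_set T]) (auto simp: T_def Ementry_def)
  also have "\<dots> = (\<Sum>k<3. Ementry lam (b, l) (madd b (ek k), j) * g (madd b (ek k)))"
    unfolding T_def by (subst sum.reindex) (auto simp: inj_on_def madd_ek_inj)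
  also have "\<dots> = (\<Sum>k<3. lam l j k * g (madd b (ek k)))"
  proof (rule sum.cong[OF refl])
    fix k :: nat assume k: "k \<in> {..<3}"
    have "(THE k'. k' < 3 \<and> madd b (ek k) = madd b (ek k')) = k"
    proof (rule the_equality)
      show "k < 3 \<and> madd b (ek k) = madd b (ek k)" using k by simp
      fix k' assume "k' < 3 \<and> madd b (ek k) = madd b (ek k')"
      then show "k' = k" using madd_ek_inj[of k k' b] k by auto
    qed
    then show "Ementry lam (b, l) (madd b (ek k), j) * g (madd b (ek k)) = lam l j k * g (madd b (ek k))"
      using k by (auto simp: Ementry_def)
  qed
  finally show ?thesis .
qed

lemma lin_eq_eval:
  fixes w :: "'k::comm_ring_1 pt3"
  assumes b: "b \<in> mons_set (n - 1)" and n: "n \<ge> 1"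
  shows "(\<Sum>i<length (mons n). \<Sum>j\<le>d. Ementry lam (b, l) (mons n ! i, j) * (mon3 (mons n ! i) w * B j))
     = mon3 b w * (\<Sum>j\<le>d. Lform lam l j w * B j)"
proof -
  have "(\<Sum>i<length (mons n). \<Sum>j\<le>d. Ementry lam (b, l) (mons n ! i, j) * (mon3 (mons n ! i) w * B j))
     = (\<Sum>\<alpha>\<in>mons_set n. \<Sum>j\<le>d. Ementry lam (b, l) (\<alpha>, j) * (mon3 \<alpha> w * B j))"
    by (rule sum_mons)
  also have "\<dots> = (\<Sum>j\<le>d. B j * (\<Sum>\<alpha>\<in>mons_set n. Ementry lam (b, l) (\<alpha>, j) * mon3 \<alpha> w))"
    by (subst sum.swap) (simp add: sum_distrib_left algebra_simps)
  also have "\<dots> = (\<Sum>j\<le>d. B j * (\<Sum>k<3. lam l j k * mon3 (madd b (ek k)) w))"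
    by (intro sum.cong refl) (simp add: E_sum[OF b n, of lam l _ "\<lambda>\<alpha>. mon3 \<alpha> w"])
  also have "\<dots> = mon3 b w * (\<Sum>j\<le>d. Lform lam l j w * B j)"
    by (simp add: mon3_madd mon3_ek Lform_def sum_distrib_left algebra_simps)
  finally show ?thesis .
qed

lemma mon3_zero: "mdeg a \<ge> 1 \<Longrightarrow> mon3 a (0,0,0) = (0::'k::comm_semiring_1)"
  by (cases a) (auto simp: mon3_def mdeg_def power_0_left)

lemma phi_in_image:
  assumes n: "n \<ge> 1" and ne: "phi n d F w \<noteq> (\<lambda>_. 0)"
  shows "phi n d F w \<in> phi_image n d F"
proof -
  have "w \<noteq> (0,0,0)"
  proof
    assume w: "w = (0,0,0)"
    have "phi n d F w = (\<lambda>_. 0)"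
    proof
      fix ij :: "nat \<times> nat"
      obtain i j where ij: "ij = (i, j)" by (cases ij) auto
      show "phi n d F w ij = 0"
      proof (cases "i < length (mons n) \<and> j \<le> d")
        case True
        then have "mdeg (mons n ! i) \<ge> 1" using mons_nth_in[of i n] n by (simp add: mons_set_def)
        then show ?thesis using True w by (simp add: phi_def ij mon3_zero)
      qed (auto simp: phi_def ij)
    qed
    then show False using ne by simp
  qed
  then show ?thesis using ne unfolding phi_image_def by blast
qed

lemma hom_poly_scale: assumes "hom_poly C s f" shows "hom_poly C s (\<lambda>x. a * f x)"
  using hom_poly_add[OF assms assms, of a 0] by simp

lemma finite_cidx: "finite (cidx u d)" by (simp add: cidx_def)

lemma phi_vals: assumes "y \<in> phi_image n d F"
  shows "\<exists>w. \<forall>i j. i < length (mons n) \<longrightarrow> j \<le> d \<longrightarrow> y (i, j) = mon3 (mons n ! i) w * F j w"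
proof -
  obtain w where "y = phi n d F w" using assms unfolding phi_image_def by blast
  then show ?thesis by (intro exI[of _ w]) (simp add: phi_def)
qed

lemma closure_sub:
  fixes lam :: "nat \<Rightarrow> nat \<Rightarrow> nat \<Rightarrow> 'k::field_char_0"
  assumes n: "n \<ge> 1"
    and x: "x \<in> proj_closure (cidx (length (mons n)) d) (proj_reps (cidx (length (mons n)) d)) (phi_image n d (Fform d lam))"
  shows "x \<in> Vset n d lam"
proof -
  define U where "U = length (mons n)"
  define C where "C = cidx U d"
  define S where "S = phi_image n d (Fform d lam)"
  have fC: "finite C" by (simp add: C_def finite_cidx)
  have inC: "(i, j) \<in> C \<longleftrightarrow> i < U \<and> j \<le> d" for i j by (simp add: C_def cidx_def)
  have xr: "x \<in> proj_reps C" using x by (simp add: proj_closure_def C_def U_def)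
  have cl: "\<And>s G. hom_poly C s G \<Longrightarrow> (\<forall>y\<in>S. G y = 0) \<Longrightarrow> G x = 0"
    using x by (simp add: proj_closure_def C_def U_def S_def)
  have e1: "(\<Sum>i<U. \<Sum>j\<le>d. Ementry lam (b, l) (mons n ! i, j) * x (i, j)) = 0"
    if b: "b \<in> mons_set (n - 1)" and l: "l < d" for b l
  proof -
    let ?G = "\<lambda>x. \<Sum>i<U. \<Sum>j\<le>d. Ementry lam (b, l) (mons n ! i, j) * x (i, j)"
    have hp: "hom_poly C 1 ?G"
      by (intro hom_poly_sum ballI hom_poly_scale hom_poly_var fC) (auto simp: inC)
    have "?G y = 0" if y: "y \<in> S" for y
    proof -
      obtain w where w: "\<forall>i j. i < U \<longrightarrow> j \<le> d \<longrightarrow> y (i, j) = mon3 (mons n ! i) w * Fform d lam j w"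
        using phi_vals[of y n d "Fform d lam"] y unfolding S_def U_def by blast
      have "?G y = (\<Sum>i<U. \<Sum>j\<le>d. Ementry lam (b, l) (mons n ! i, j) * (mon3 (mons n ! i) w * Fform d lam j w))"
        using w by (intro sum.cong refl) auto
      also have "\<dots> = mon3 b w * (\<Sum>j\<le>d. Lform lam l j w * Fform d lam j w)"
        unfolding U_def by (rule lin_eq_eval[OF b n])
      also have "\<dots> = 0" using LF_zero[OF l, of lam w] by simp
      finally show ?thesis .
    qed
    then show ?thesis using cl[OF hp] by blast
  qed
  have e2: "x (i1, j1) * x (i2, j2) - x (i1, j2) * x (i2, j1) = 0"
    if "i1 < U" "i2 < U" "j1 \<le> d" "j2 \<le> d" for i1 i2 j1 j2
  proof -
    have hp: "hom_poly C 2 (\<lambda>x :: nat \<times> nat \<Rightarrow> 'k. x (i1, j1) * x (i2, j2) - x (i1, j2) * x (i2, j1))"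
      by (rule hom_poly_minor[OF fC]) (use that in \<open>auto simp: inC\<close>)
    have "y (i1, j1) * y (i2, j2) - y (i1, j2) * y (i2, j1) = 0" if y: "y \<in> S" for y
    proof -
      obtain w where w: "\<forall>i j. i < U \<longrightarrow> j \<le> d \<longrightarrow> y (i, j) = mon3 (mons n ! i) w * Fform d lam j w"
        using phi_vals[of y n d "Fform d lam"] y unfolding S_def U_def by blast
      show ?thesis using w \<open>i1 < U\<close> \<open>i2 < U\<close> \<open>j1 \<le> d\<close> \<open>j2 \<le> d\<close> by (simp add: algebra_simps)
    qed
    then show ?thesis using cl[OF hp] by blast
  qed
  have e3: "x (midx n (madd b1 (ek k1)), j) * x (midx n (madd b2 (ek k2)), j)
        - x (midx n (madd b2 (ek k1)), j) * x (midx n (madd b1 (ek k2)), j) = 0"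
    if j: "j \<le> d" and b1: "b1 \<in> mons_set (n - 1)" and b2: "b2 \<in> mons_set (n - 1)" for j k1 k2 b1 b2
  proof -
    have m: "madd b (ek k) \<in> mons_set n" if "b \<in> mons_set (n - 1)" for b k
      using madd_ek_in[OF that n] .
    have mi: "midx n (madd b (ek k)) < U" "mons n ! midx n (madd b (ek k)) = madd b (ek k)"
      if "b \<in> mons_set (n - 1)" for b k
      using midx_props[OF m[OF that]] by (auto simp: U_def)
    have hp: "hom_poly C 2 (\<lambda>x :: nat \<times> nat \<Rightarrow> 'k. x (midx n (madd b1 (ek k1)), j) * x (midx n (madd b2 (ek k2)), j)
        - x (midx n (madd b2 (ek k1)), j) * x (midx n (madd b1 (ek k2)), j))"
      by (rule hom_poly_minor[OF fC]) (use mi b1 b2 j in \<open>auto simp: inC\<close>)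
    have "y (midx n (madd b1 (ek k1)), j) * y (midx n (madd b2 (ek k2)), j)
        - y (midx n (madd b2 (ek k1)), j) * y (midx n (madd b1 (ek k2)), j) = 0" if y: "y \<in> S" for y
    proof -
      obtain w where w: "\<forall>i j. i < U \<longrightarrow> j \<le> d \<longrightarrow> y (i, j) = mon3 (mons n ! i) w * Fform d lam j w"
        using phi_vals[of y n d "Fform d lam"] y unfolding S_def U_def by blast
      have yv: "y (midx n (madd b (ek k)), j) = mon3 b w * mon3 (ek k) w * Fform d lam j w"
        if "b \<in> mons_set (n - 1)" for b k
        using w mi[OF that, of k] j by (simp add: mon3_madd)
      show ?thesis using yv[OF b1] yv[OF b2] by (simp add: algebra_simps)
    qed
    then show ?thesis using cl[OF hp] by blast
  qed
  show ?thesis unfolding Vset_def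
    using xr e1 e2 e3 by (simp add: C_def U_def)
qed

lemma phi_out: "\<not> (i < length (mons n) \<and> j \<le> d) \<Longrightarrow> phi n d F w (i, j) = 0"
  by (auto simp: phi_def)

lemma phi_in: "i < length (mons n) \<Longrightarrow> j \<le> d \<Longrightarrow> phi n d F w (i, j) = mon3 (mons n ! i) w * F j w"
  by (simp add: phi_def)

lemma V_sub:
  fixes lam :: "nat \<Rightarrow> nat \<Rightarrow> nat \<Rightarrow> 'k::field_char_0"
  assumes n: "n \<ge> 1" and X: "proj_point_set X"
    and ideal: "ideal_generated_by X (d + 1) (Fform d lam)"
    and x: "x \<in> Vset n d lam"
  shows "x \<in> proj_closure (cidx (length (mons n)) d) (proj_reps (cidx (length (mons n)) d)) (phi_image n d (Fform d lam))"
proof -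
  define U where "U = length (mons n)"
  define C where "C = cidx U d"
  define S where "S = phi_image n d (Fform d lam)"
  have fC: "finite C" by (simp add: C_def finite_cidx)
  have inC: "(i, j) \<in> C \<longleftrightarrow> i < U \<and> j \<le> d" for i j by (simp add: C_def cidx_def)
  have xr: "x \<in> proj_reps C" using x by (simp add: Vset_def C_def U_def)
  have lin: "\<forall>b\<in>mons_set (n - 1). \<forall>l<d. (\<Sum>i<U. \<Sum>j\<le>d. Ementry lam (b, l) (mons n ! i, j) * x (i, j)) = 0"
    using x by (simp add: Vset_def U_def)
  have minors: "\<forall>i1<U. \<forall>i2<U. \<forall>j1\<le>d. \<forall>j2\<le>d. x (i1, j1) * x (i2, j2) - x (i1, j2) * x (i2, j1) = 0"
    using x by (simp add: Vset_def U_def)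
  have cat: "\<forall>j\<le>d. \<forall>k1<3. \<forall>k2<3. \<forall>b1\<in>mons_set (n - 1). \<forall>b2\<in>mons_set (n - 1).
        x (midx n (madd b1 (ek k1)), j) * x (midx n (madd b2 (ek k2)), j)
        - x (midx n (madd b2 (ek k1)), j) * x (midx n (madd b1 (ek k2)), j) = 0"
    using x by (simp add: Vset_def)
  obtain i0 j0 where ij0: "i0 < U" "j0 \<le> d" "x (i0, j0) \<noteq> 0"
    using xr unfolding proj_reps_def by (auto simp: inC)
  have xout: "x c = 0" if "c \<notin> C" for c using xr that unfolding proj_reps_def by blast
  define a where "a \<alpha> = x (midx n \<alpha>, j0)" for \<alpha>
  have a0: "mons n ! i0 \<in> mons_set n" "a (mons n ! i0) \<noteq> 0"
    using ij0 mons_nth_in[of i0 n] midx_nth[of i0 n] by (auto simp: a_def U_def)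
  have cat0: "\<forall>k1<3. \<forall>k2<3. \<forall>b1\<in>mons_set (n - 1). \<forall>b2\<in>mons_set (n - 1).
        a (madd b1 (ek k1)) * a (madd b2 (ek k2)) - a (madd b2 (ek k1)) * a (madd b1 (ek k2)) = 0"
    using cat ij0(2) unfolding a_def by blast
  obtain v c where vc: "v \<noteq> (0,0,0)" "\<forall>\<alpha>\<in>mons_set n. a \<alpha> = c * mon3 \<alpha> v"
    using veronese[OF n cat0 a0] by blast
  have xa: "x (i, j0) = c * mon3 (mons n ! i) v" if "i < U" for i
  proof -
    have "a (mons n ! i) = x (i, j0)" using midx_nth[of i n] that by (simp add: a_def U_def)
    then show ?thesis using vc(2) mons_nth_in[of i n] that by (simp add: U_def)
  qed
  define bb where "bb j = x (i0, j) / x (i0, j0)" for j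
  have xb: "x (i, j) = c * mon3 (mons n ! i) v * bb j" if "i < U" "j \<le> d" for i j
  proof -
    have "x (i, j) * x (i0, j0) - x (i, j0) * x (i0, j) = 0" using minors that ij0 by blast
    then have "x (i, j) = x (i, j0) * x (i0, j) / x (i0, j0)" using ij0(3) by (simp add: field_simps)
    then show ?thesis using xa[OF that(1)] by (simp add: bb_def)
  qed
  have bj0: "bb j0 = 1" using ij0 by (simp add: bb_def)
  have c0: "c \<noteq> 0" using xa[OF ij0(1)] ij0(3) by auto
  obtain k where k: "k < 3" "coord v k \<noteq> 0"
  proof -
    have "coord v 0 \<noteq> 0 \<or> coord v 1 \<noteq> 0 \<or> coord v 2 \<noteq> 0"
      using vc(1) by (cases v) (auto simp: coord_def)
    then show ?thesis using that[of 0] that[of 1] that[of 2] by auto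
  qed
  have ker: "\<forall>l<d. (\<Sum>j\<le>d. Lform lam l j v * bb j) = 0"
  proof (intro allI impI)
    fix l assume l: "l < d"
    define \<beta> where "\<beta> = nek (n - 1) k"
    have b: "\<beta> \<in> mons_set (n - 1)" by (simp add: \<beta>_def nek_in)
    have "0 = (\<Sum>i<U. \<Sum>j\<le>d. Ementry lam (\<beta>, l) (mons n ! i, j) * x (i, j))"
      using lin b l by simp
    also have "\<dots> = (\<Sum>i<U. \<Sum>j\<le>d. Ementry lam (\<beta>, l) (mons n ! i, j) * (mon3 (mons n ! i) v * (c * bb j)))"
      using xb by (intro sum.cong refl) (simp add: algebra_simps)
    also have "\<dots> = mon3 \<beta> v * (\<Sum>j\<le>d. Lform lam l j v * (c * bb j))"
      unfolding U_def by (rule lin_eq_eval[OF b n])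
    also have "\<dots> = mon3 \<beta> v * c * (\<Sum>j\<le>d. Lform lam l j v * bb j)"
      by (simp add: sum_distrib_left algebra_simps)
    finally have "mon3 \<beta> v * c * (\<Sum>j\<le>d. Lform lam l j v * bb j) = 0" by simp
    moreover have "mon3 \<beta> v \<noteq> 0" using k by (simp add: \<beta>_def mon3_nek)
    ultimately show "(\<Sum>j\<le>d. Lform lam l j v * bb j) = 0" using c0 by simp
  qed
  show ?thesis
  proof (cases "\<exists>j1\<le>d. Fform d lam j1 v \<noteq> 0")
    case True
    then obtain j1 where j1: "j1 \<le> d" "Fform d lam j1 v \<noteq> 0" by blast
    define \<kappa> where "\<kappa> = bb j1 / Fform d lam j1 v"
    have bk: "\<forall>j\<le>d. bb j = \<kappa> * Fform d lam j v" using kernel_F[OF ker j1] by (simp add: \<kappa>_def)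
    have k0: "\<kappa> \<noteq> 0" using bk ij0(2) bj0 by force
    show ?thesis unfolding C_def[symmetric] U_def[symmetric] S_def[symmetric]
    proof (rule curve_closure[OF fC xr, of "\<lambda>c'. [:x c':]"])
      show "\<forall>c\<in>C. poly [:x c:] 0 = x c" by simp
      define \<mu> where "\<mu> = 1 / (c * \<kappa>)"
      have mu: "\<mu> \<noteq> 0" using c0 k0 by (simp add: \<mu>_def)
      have eqphi: "(\<lambda>c'. if c' \<in> C then \<mu> * poly [:x c':] e else 0) = phi n d (Fform d lam) v" for e
      proof
        fix ij :: "nat \<times> nat"
        obtain i j where ij: "ij = (i, j)" by (cases ij) auto
        show "(if ij \<in> C then \<mu> * poly [:x ij:] e else 0) = phi n d (Fform d lam) v ij"
        proof (cases "i < U \<and> j \<le> d")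
          case True
          then have ijC: "ij \<in> C" by (simp add: ij inC)
          have ph: "phi n d (Fform d lam) v ij = mon3 (mons n ! i) v * Fform d lam j v"
            unfolding ij by (rule phi_in) (use True in \<open>simp_all add: U_def\<close>)
          have xij: "x ij = c * mon3 (mons n ! i) v * (\<kappa> * Fform d lam j v)"
            using xb[of i j] bk True by (simp add: ij)
          have "\<mu> * x ij = mon3 (mons n ! i) v * Fform d lam j v"
            unfolding xij \<mu>_def using c0 k0 by (simp add: field_simps)
          then show ?thesis using ijC ph by simp
        next
          case False
          have "ij \<notin> C" using False by (simp add: ij inC)
          moreover have "phi n d (Fform d lam) v ij = 0" unfolding ij by (rule phi_out) (use False in \<open>simp add: U_def\<close>)
          ultimately show ?thesis by simp
        qed
      qed
      have "phi n d (Fform d lam) v (i0, j0) \<noteq> 0"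
      proof -
        have "(i0, j0) \<in> C" using ij0 by (simp add: inC)
        then have "phi n d (Fform d lam) v (i0, j0) = \<mu> * x (i0, j0)"
          using fun_cong[OF eqphi[of 0], of "(i0, j0)"] by simp
        then show ?thesis using mu ij0(3) by simp
      qed
      then have "phi n d (Fform d lam) v \<noteq> (\<lambda>_. 0)" by auto
      then have "phi n d (Fform d lam) v \<in> S" unfolding S_def by (rule phi_in_image[OF n])
      then show "\<forall>e. e \<noteq> 0 \<longrightarrow> (\<exists>c\<in>C. poly [:x c:] e \<noteq> 0) \<longrightarrow>
          (\<exists>\<mu>. \<mu> \<noteq> 0 \<and> (\<lambda>c'. if c' \<in> C then \<mu> * poly [:x c':] e else 0) \<in> S)"
        using eqphi mu by (intro allI impI exI[of _ \<mu>]) simp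
    qed
  next
    case False
    then have Fv: "\<forall>j\<le>d. Fform d lam j v = 0" by blast
    obtain u' where u': "\<forall>j\<le>d. Dd d lam j v u' = bb j"
      using exceptional[OF X ideal vc(1) Fv ker] by blast
    have "\<forall>j. \<exists>q. j \<le> d \<longrightarrow> FP d lam j v u' = pCons 0 q"
    proof (intro allI)
      fix j
      obtain a0 q where aq: "FP d lam j v u' = pCons a0 q" by (rule pCons_cases)
      have "j \<le> d \<longrightarrow> a0 = 0" using coeff_FP0[of d lam j v u'] Fv aq by auto
      then show "\<exists>q. j \<le> d \<longrightarrow> FP d lam j v u' = pCons 0 q" using aq by blast
    qed
    then obtain Q where Q: "\<And>j. j \<le> d \<Longrightarrow> FP d lam j v u' = pCons 0 (Q j)" by metis
    have Q0: "poly (Q j) 0 = bb j" if "j \<le> d" for j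
    proof -
      have "coeff (FP d lam j v u') 1 = coeff (Q j) 0" using Q[OF that] by simp
      then show ?thesis using u' that coeff_FP1[of d lam j v u'] by (simp add: poly_0_coeff_0)
    qed
    define P where "P ij = smult c (mline (mons n ! fst ij) v u' * Q (snd ij))" for ij
    show ?thesis unfolding C_def[symmetric] U_def[symmetric] S_def[symmetric]
    proof (rule curve_closure[OF fC xr, of P])
      show "\<forall>c\<in>C. poly (P c) 0 = x c"
      proof
        fix ij assume "ij \<in> C"
        then obtain i j where ij: "ij = (i, j)" "i < U" "j \<le> d" by (cases ij) (auto simp: inC)
        show "poly (P ij) 0 = x ij"
          using xb[OF ij(2,3)] Q0[OF ij(3)] by (simp add: P_def ij poly_mline lin0)
      qed
      show "\<forall>e. e \<noteq> 0 \<longrightarrow> (\<exists>c\<in>C. poly (P c) e \<noteq> 0) \<longrightarrow>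
          (\<exists>\<mu>. \<mu> \<noteq> 0 \<and> (\<lambda>c'. if c' \<in> C then \<mu> * poly (P c') e else 0) \<in> S)"
      proof (intro allI impI)
        fix e :: 'k assume e: "e \<noteq> 0" and nz: "\<exists>c\<in>C. poly (P c) e \<noteq> 0"
        define \<mu> where "\<mu> = e / c"
        have mu: "\<mu> \<noteq> 0" using e c0 by (simp add: \<mu>_def)
        have eqphi: "(\<lambda>c'. if c' \<in> C then \<mu> * poly (P c') e else 0) = phi n d (Fform d lam) (lin v e u')"
        proof
          fix ij :: "nat \<times> nat"
          obtain i j where ij: "ij = (i, j)" by (cases ij) auto
          show "(if ij \<in> C then \<mu> * poly (P ij) e else 0) = phi n d (Fform d lam) (lin v e u') ij"
          proof (cases "i < U \<and> j \<le> d")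
            case True
            have "Fform d lam j (lin v e u') = e * poly (Q j) e"
              using poly_FP[of d lam j v u' e] Q[of j] True by simp
            have ijC: "ij \<in> C" using True by (simp add: ij inC)
            have ph: "phi n d (Fform d lam) (lin v e u') ij = mon3 (mons n ! i) (lin v e u') * Fform d lam j (lin v e u')"
              unfolding ij by (rule phi_in) (use True in \<open>simp_all add: U_def\<close>)
            have "\<mu> * poly (P ij) e = mon3 (mons n ! i) (lin v e u') * (e * poly (Q j) e)"
              unfolding \<mu>_def P_def ij using c0 by (simp add: poly_mline)
            then show ?thesis using ijC ph \<open>Fform d lam j (lin v e u') = e * poly (Q j) e\<close> by simp
          next
            case False
            have "ij \<notin> C" using False by (simp add: ij inC)
          moreover have "phi n d (Fform d lam) (lin v e u') ij = 0" unfolding ij by (rule phi_out) (use False in \<open>simp add: U_def\<close>)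
          ultimately show ?thesis by simp
          qed
        qed
        obtain c' where c': "c' \<in> C" "poly (P c') e \<noteq> 0" using nz by blast
        have "phi n d (Fform d lam) (lin v e u') c' \<noteq> 0"
          using fun_cong[OF eqphi, of c'] c' mu by (metis mult_eq_0_iff)
        then have "phi n d (Fform d lam) (lin v e u') \<noteq> (\<lambda>_. 0)" by auto
        then have "phi n d (Fform d lam) (lin v e u') \<in> S" unfolding S_def by (rule phi_in_image[OF n])
        then show "\<exists>\<mu>. \<mu> \<noteq> 0 \<and> (\<lambda>c'. if c' \<in> C then \<mu> * poly (P c') e else 0) \<in> S"
          using eqphi mu by (intro exI[of _ \<mu>]) simp
      qed
    qed
  qed
qed

theorem theorem2p4:
  fixes d n t u p :: nat and X :: "'k::field_char_0 pt3 set"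
    and lam :: "nat \<Rightarrow> nat \<Rightarrow> nat \<Rightarrow> 'k"
  assumes "alg_closed TYPE('k)"
    and "d \<ge> 1" and "n \<ge> 1"
    and "t = d + n" and "u = (n + 2) choose 2" and "p = u * (d + 1) - 1"
    and "proj_point_set X" and "card X = (d + 1) choose 2"
    and "generic_position X"
    and "ideal_generated_by X (d + 1) (Fform d lam)"
  shows "Vset n d lam =
    proj_closure (cidx u d) (proj_reps (cidx u d)) (phi_image n d (Fform d lam))"
proof -
  have u: "u = length (mons n)" using assms(5) length_mons by simp
  show ?thesis unfolding u
    using V_sub[OF assms(3,7,10)] closure_sub[OF assms(3)] by blast
qed

end
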